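(* Consider the sub-$\ell^\infty$ structure on $\mathbb{R}^3$ defined by $X_1=\partial_x-\tfrac{y}{2}\partial_z$, $X_2=\partial_y+\tfrac{x}{2}\partial_z$. A regular bang-bang trajectory with more than $5$ arcs is not a time-minimizer.
   Context: Sub-$\ell^\infty$ structure defined by smooth vector fields $X_1,\dots,X_k$ on a manifold $M$: an admissible trajectory is an absolutely continuous curve $\gamma:[0,T]\to M$ together with a measurable control $u=(u_1,\dots,u_k):[0,T]\to\mathbb{R}^k$ with $|u_i(t)|\le1$ for all $i$ and a.e. $t$, such that $\dot\gamma(t)=\sum_i u_i(t)X_i(\gamma(t))$ for a.e. $t$. It is a time-minimizer (optimal) if no admissible trajectory joins $\gamma(0)$ to $\gamma(T)$ in time less than $T$. An extremal pair is a pair $(\lambda,\gamma)$ where $\gamma$ is admissible with control $u$ and $\lambda:[0,T]\to T^*M$ is absolutely continuous with $\lambda(t)\in T^*_{\gamma(t)}M\setminus\{0\}$, such that, with $\mathcal H(\lambda,p,u)=\sum_i u_i\langle\lambda,X_i(p)\rangle$, in canonical coordinates $\dot\lambda=-\partial_p\mathcal H(\lambda,\gamma,u)$, $\dot\gamma=\partial_\lambda\mathcal H(\lambda,\gamma,u)$ a.e., and there is a constant $\lambda_0\ge0$ with $\sum_iu_i(t)\langle\lambda(t),X_i(\gamma(t))\rangle=\sum_i|\langle\lambda(t),X_i(\gamma(t))\rangle|=\lambda_0$ for a.e. $t$; $\gamma$ is then an extremal trajectory and $\lambda$ an extremal lift. The switching functions are $\varphi_j(t)=\langle\lambda(t),X_j(\gamma(t))\rangle$.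 The restriction of an extremal pair to an open interval $I$ is a regular arc if $\varphi_j(t)\ne0$ for all $t\in I$ and all $j$; arcs are taken maximal (not contained in a strictly larger open interval with the same property). A regular bang-bang trajectory is an extremal trajectory with an extremal lift such that $[0,T]$ minus finitely many points is a finite union of maximal regular arcs (on each of which the control is then constant with values in $\{1,-1\}^k$); these are its arcs. *)

theory Defs
  imports "HOL-Analysis.Analysis"
begin

type_synonym R3 = "real \<times> real \<times> real"

definition abs_cont_on :: "real \<Rightarrow> real \<Rightarrow> (real \<Rightarrow> 'a::real_normed_vector) \<Rightarrow> bool" where
  "abs_cont_on a b f \<longleftrightarrow>
     (\<forall>\<epsilon>>0. \<exists>\<delta>>0. \<forall>(n::nat) (s::nat \<Rightarrow> real) (t::nat \<Rightarrow> real).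
        (\<forall>i<n. a \<le> s i \<and> s i \<le> t i \<and> t i \<le> b) \<and>
        (\<forall>i<n. \<forall>j<n. i \<noteq> j \<longrightarrow> t i \<le> s j \<or> t j \<le> s i) \<and>
        (\<Sum>i<n. t i - s i) < \<delta>
        \<longrightarrow> (\<Sum>i<n. norm (f (t i) - f (s i))) < \<epsilon>)"

definition X1 :: "R3 \<Rightarrow> R3" where
  "X1 p = (case p of (x, y, z) \<Rightarrow> (1, 0, - y / 2))"

definition X2 :: "R3 \<Rightarrow> R3" where
  "X2 p = (case p of (x, y, z) \<Rightarrow> (0, 1, x / 2))"

definition admissible :: "real \<Rightarrow> (real \<Rightarrow> R3) \<Rightarrow> (real \<Rightarrow> real) \<Rightarrow> (real \<Rightarrow> real) \<Rightarrow> bool" where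
  "admissible T \<gamma> u1 u2 \<longleftrightarrow>
     0 \<le> T \<and> abs_cont_on 0 T \<gamma> \<and>
     u1 \<in> borel_measurable (restrict_space lebesgue {0..T}) \<and>
     u2 \<in> borel_measurable (restrict_space lebesgue {0..T}) \<and>
     (AE t in lebesgue. t \<in> {0..T} \<longrightarrow>
        \<bar>u1 t\<bar> \<le> 1 \<and> \<bar>u2 t\<bar> \<le> 1 \<and>
        (\<gamma> has_vector_derivative (u1 t *\<^sub>R X1 (\<gamma> t) + u2 t *\<^sub>R X2 (\<gamma> t))) (at t))"

definition time_minimizer :: "real \<Rightarrow> (real \<Rightarrow> R3) \<Rightarrow> bool" where
  "time_minimizer T \<gamma> \<longleftrightarrow>
     \<not> (\<exists>T' \<gamma>' v1 v2. T' < T \<and> admissible T' \<gamma>' v1 v2 \<and>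
          \<gamma>' 0 = \<gamma> 0 \<and> \<gamma>' T' = \<gamma> T)"

text \<open>Control Hamiltonian H(lambda, p, u) = sum_i u_i <lambda, X_i(p)>
  (covectors on R^3 identified with R^3 via the inner product).\<close>
definition ham :: "R3 \<Rightarrow> R3 \<Rightarrow> real \<Rightarrow> real \<Rightarrow> real" where
  "ham l p v1 v2 = v1 * (l \<bullet> X1 p) + v2 * (l \<bullet> X2 p)"

text \<open>Extremal pair (lambda, gamma) with control (u1,u2):
  lambda' = - d_p H, gamma' = d_lambda H, and maximality condition with constant lambda0.\<close>
definition extremal_pair :: "real \<Rightarrow> (real \<Rightarrow> R3) \<Rightarrow> (real \<Rightarrow> real) \<Rightarrow> (real \<Rightarrow> real)
    \<Rightarrow> (real \<Rightarrow> R3) \<Rightarrow> bool" where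
  "extremal_pair T \<gamma> u1 u2 lam \<longleftrightarrow>
     admissible T \<gamma> u1 u2 \<and> abs_cont_on 0 T lam \<and>
     (\<forall>t\<in>{0..T}. lam t \<noteq> 0) \<and>
     (\<exists>lam0::real. lam0 \<ge> 0 \<and>
       (AE t in lebesgue. t \<in> {0..T} \<longrightarrow>
          (\<exists>l'. (lam has_vector_derivative l') (at t) \<and>
               ((\<lambda>p. ham (lam t) p (u1 t) (u2 t)) has_derivative (\<lambda>h. - (l' \<bullet> h))) (at (\<gamma> t))) \<and>
          (\<gamma> has_vector_derivative
              (u1 t *\<^sub>R X1 (\<gamma> t) + u2 t *\<^sub>R X2 (\<gamma> t))) (at t) \<and>
          ((\<lambda>l. ham l (\<gamma> t) (u1 t) (u2 t)) has_derivative
              (\<lambda>h. h \<bullet> (u1 t *\<^sub>R X1 (\<gamma> t) + u2 t *\<^sub>R X2 (\<gamma> t)))) (at (lam t)) \<and>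
          u1 t * (lam t \<bullet> X1 (\<gamma> t)) + u2 t * (lam t \<bullet> X2 (\<gamma> t)) = lam0 \<and>
          \<bar>lam t \<bullet> X1 (\<gamma> t)\<bar> + \<bar>lam t \<bullet> X2 (\<gamma> t)\<bar> = lam0))"

definition phi1 :: "(real \<Rightarrow> R3) \<Rightarrow> (real \<Rightarrow> R3) \<Rightarrow> real \<Rightarrow> real" where
  "phi1 \<gamma> lam t = lam t \<bullet> X1 (\<gamma> t)"

definition phi2 :: "(real \<Rightarrow> R3) \<Rightarrow> (real \<Rightarrow> R3) \<Rightarrow> real \<Rightarrow> real" where
  "phi2 \<gamma> lam t = lam t \<bullet> X2 (\<gamma> t)"

definition regular_arc :: "real \<Rightarrow> (real \<Rightarrow> R3) \<Rightarrow> (real \<Rightarrow> R3) \<Rightarrow> real \<Rightarrow> real \<Rightarrow> bool" where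
  "regular_arc T \<gamma> lam a b \<longleftrightarrow>
     0 \<le> a \<and> a < b \<and> b \<le> T \<and>
     (\<forall>t\<in>{a<..<b}. phi1 \<gamma> lam t \<noteq> 0 \<and> phi2 \<gamma> lam t \<noteq> 0)"

definition max_regular_arc :: "real \<Rightarrow> (real \<Rightarrow> R3) \<Rightarrow> (real \<Rightarrow> R3) \<Rightarrow> real \<Rightarrow> real \<Rightarrow> bool" where
  "max_regular_arc T \<gamma> lam a b \<longleftrightarrow>
     regular_arc T \<gamma> lam a b \<and>
     (\<forall>a' b'. regular_arc T \<gamma> lam a' b' \<and> {a<..<b} \<subseteq> {a'<..<b'} \<longrightarrow> a' = a \<and> b' = b)"

definition arcs :: "real \<Rightarrow> (real \<Rightarrow> R3) \<Rightarrow> (real \<Rightarrow> R3) \<Rightarrow> (real \<times> real) set" where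
  "arcs T \<gamma> lam = {(a, b). max_regular_arc T \<gamma> lam a b}"

definition regular_bang_bang_wrt :: "real \<Rightarrow> (real \<Rightarrow> R3) \<Rightarrow> (real \<Rightarrow> R3) \<Rightarrow> bool" where
  "regular_bang_bang_wrt T \<gamma> lam \<longleftrightarrow>
     (\<exists>S A. finite S \<and> finite A \<and> A \<subseteq> arcs T \<gamma> lam \<and>
        {0..T} - S = (\<Union>(a, b)\<in>A. {a<..<b}))"

end

theory Submission
  imports Defs
begin

lemma ac_sum_small:
  fixes f :: "real \<Rightarrow> 'a::real_normed_vector"
  assumes ac: "abs_cont_on a b f" and e: "e > 0"
  shows "\<exists>d>0. \<forall>Q. finite Q \<and> (\<forall>K\<in>Q. \<exists>u v. K = {u..v} \<and> u < v \<and> K \<subseteq> {a..b}) \<and>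
     (\<forall>K\<in>Q. \<forall>L\<in>Q. K \<noteq> L \<longrightarrow> interior K \<inter> interior L = {}) \<and>
     (\<Sum>K\<in>Q. Sup K - Inf K) < d \<longrightarrow> (\<Sum>K\<in>Q. norm (f (Sup K) - f (Inf K))) < e"
proof -
  obtain d where d: "d > 0" and H0: "\<forall>(n::nat) (s::nat \<Rightarrow> real) (t::nat \<Rightarrow> real).
        (\<forall>i<n. a \<le> s i \<and> s i \<le> t i \<and> t i \<le> b) \<and>
        (\<forall>i<n. \<forall>j<n. i \<noteq> j \<longrightarrow> t i \<le> s j \<or> t j \<le> s i) \<and>
        (\<Sum>i<n. t i - s i) < d \<longrightarrow> (\<Sum>i<n. norm (f (t i) - f (s i))) < e"
    using ac[unfolded abs_cont_on_def, rule_format, OF e] by (elim exE conjE) 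
  have H: "\<And>(n::nat) (s::nat\<Rightarrow>real) (t::nat\<Rightarrow>real). (\<forall>i<n. a \<le> s i \<and> s i \<le> t i \<and> t i \<le> b) \<Longrightarrow>
        (\<forall>i<n. \<forall>j<n. i \<noteq> j \<longrightarrow> t i \<le> s j \<or> t j \<le> s i) \<Longrightarrow>
        (\<Sum>i<n. t i - s i) < d \<Longrightarrow> (\<Sum>i<n. norm (f (t i) - f (s i))) < e"
    by (rule H0[rule_format]) blast
  show ?thesis
  proof (intro exI conjI allI impI)
    show "d > 0" by fact
    fix Q :: "real set set"
    assume A: "finite Q \<and> (\<forall>K\<in>Q. \<exists>u v. K = {u..v} \<and> u < v \<and> K \<subseteq> {a..b}) \<and>
     (\<forall>K\<in>Q. \<forall>L\<in>Q. K \<noteq> L \<longrightarrow> interior K \<inter> interior L = {}) \<and>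
     (\<Sum>K\<in>Q. Sup K - Inf K) < d"
    note A1 = conjunct1[OF A]
    note A2 = conjunct1[OF conjunct2[OF A]]
    note A3 = conjunct1[OF conjunct2[OF conjunct2[OF A]]]
    note A4 = conjunct2[OF conjunct2[OF conjunct2[OF A]]]
    from A1 have "finite Q" .
    then obtain h where h0: "bij_betw h {0..<card Q} Q"
      using ex_bij_betw_nat_finite by blast
    then have h: "bij_betw h {..<card Q} Q" by (simp add: atLeast0LessThan)
    define s where "s i = Inf (h i)" for i
    define t where "t i = Sup (h i)" for i
    have iv: "\<And>i. i < card Q \<Longrightarrow> h i = {s i..t i} \<and> s i < t i \<and> h i \<subseteq> {a..b}"
    proof -
      fix i assume "i < card Q"
      then have "h i \<in> Q" using h bij_betwE by blast
      then obtain u v where "h i = {u..v}" "u < v" "h i \<subseteq> {a..b}" using A2 by blast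
      then show "h i = {s i..t i} \<and> s i < t i \<and> h i \<subseteq> {a..b}"
        unfolding s_def t_def by auto
    qed
    have sum1: "(\<Sum>i<card Q. t i - s i) = (\<Sum>K\<in>Q. Sup K - Inf K)"
      using sum.reindex_bij_betw[OF h, of "\<lambda>K. Sup K - Inf K"] unfolding s_def t_def by simp
    have sum2: "(\<Sum>i<card Q. norm (f (t i) - f (s i))) = (\<Sum>K\<in>Q. norm (f (Sup K) - f (Inf K)))"
      using sum.reindex_bij_betw[OF h, of "\<lambda>K. norm (f (Sup K) - f (Inf K))"] unfolding s_def t_def by simp
    have "(\<Sum>i<card Q. norm (f (t i) - f (s i))) < e"
    proof (rule H)
      show "\<forall>i<card Q. a \<le> s i \<and> s i \<le> t i \<and> t i \<le> b"
      proof (intro allI impI)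
        fix i assume "i < card Q"
        from iv[OF this] have "s i < t i" "{s i..t i} \<subseteq> {a..b}" by auto
        then show "a \<le> s i \<and> s i \<le> t i \<and> t i \<le> b" by auto
      qed
      show "\<forall>i<card Q. \<forall>j<card Q. i \<noteq> j \<longrightarrow> t i \<le> s j \<or> t j \<le> s i"
      proof (intro allI impI)
        fix i j assume ij: "i < card Q" "j < card Q" "i \<noteq> j"
        then have "h i \<noteq> h j" using h unfolding bij_betw_def inj_on_def by auto
        moreover have "h i \<in> Q" "h j \<in> Q" using ij h bij_betwE by blast+
        ultimately have "interior (h i) \<inter> interior (h j) = {}" using A3 by blast
        then have D: "{s i<..<t i} \<inter> {s j<..<t j} = {}" using iv ij by simp
        show "t i \<le> s j \<or> t j \<le> s i"
        proof (rule ccontr)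
          assume "\<not> ?thesis"
          moreover have "s i < t i" "s j < t j" using iv ij by auto
          ultimately have "(max (s i) (s j) + min (t i) (t j)) / 2 \<in> {s i<..<t i} \<inter> {s j<..<t j}"
            by (auto simp: max_def min_def)
          with D show False by blast
        qed
      qed
      show "(\<Sum>i<card Q. t i - s i) < d" using sum1 A4 by simp
    qed
    then show "(\<Sum>K\<in>Q. norm (f (Sup K) - f (Inf K))) < e" using sum2 by simp
  qed
qed


lemma measure_Icc_real: "u \<le> v \<Longrightarrow> measure lebesgue {u..v::real} = v - u"
  by simp

lemma ac_deriv_bound:
  fixes f :: "real \<Rightarrow> 'a::real_normed_vector"
  assumes ac: "abs_cont_on a b f" and ab: "a \<le> b" and N: "negligible N"
    and der: "\<And>t. t \<in> {a..b} - N \<Longrightarrow> \<exists>D. (f has_vector_derivative D) (at t) \<and> norm D \<le> M"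
  shows "norm (f b - f a) \<le> M * (b - a)"
proof (cases "a = b")
  case True then show ?thesis by simp
next
  case False
  then have ab': "a < b" using ab by simp
  have "\<not> negligible {a..b}" using ab' negligible_interval(1)[of a b] by simp
  have "{a..b} - N \<noteq> {}"
  proof
    assume "{a..b} - N = {}"
    then have "{a..b} \<subseteq> N" by blast
    then have "negligible {a..b}" using negligible_subset[OF N] by blast
    with \<open>\<not> negligible {a..b}\<close> show False by contradiction
  qed
  then obtain t0 where "t0 \<in> {a..b} - N" by blast
  then obtain D0 :: 'a where "norm D0 \<le> M" using der by blast
  then have M0: "M \<ge> 0" using norm_ge_zero[of D0] by linarith
  show ?thesis
  proof (rule field_le_epsilon)
    fix e :: real assume e: "e > 0"
    define e' where "e' = e / (b - a + 1)"
    have e'0: "e' > 0" using e ab unfolding e'_def by simp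
    have e'e: "e' * (b - a + 1) = e" using ab unfolding e'_def by simp
    obtain d where d: "d > 0" and dH: "\<And>Q. finite Q \<Longrightarrow> (\<forall>K\<in>Q. \<exists>u v. K = {u..v} \<and> u < v \<and> K \<subseteq> {a..b}) \<Longrightarrow>
     (\<forall>K\<in>Q. \<forall>L\<in>Q. K \<noteq> L \<longrightarrow> interior K \<inter> interior L = {}) \<Longrightarrow>
     (\<Sum>K\<in>Q. Sup K - Inf K) < d \<Longrightarrow> (\<Sum>K\<in>Q. norm (f (Sup K) - f (Inf K))) < e'"
    proof -
      from ac_sum_small[OF ac e'0] obtain d where d: "d > 0" and dH0: "\<forall>Q. finite Q \<and> (\<forall>K\<in>Q. \<exists>u v. K = {u..v} \<and> u < v \<and> K \<subseteq> {a..b}) \<and>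
     (\<forall>K\<in>Q. \<forall>L\<in>Q. K \<noteq> L \<longrightarrow> interior K \<inter> interior L = {}) \<and>
     (\<Sum>K\<in>Q. Sup K - Inf K) < d \<longrightarrow> (\<Sum>K\<in>Q. norm (f (Sup K) - f (Inf K))) < e'"
        by (elim exE conjE)
      show ?thesis
      proof (rule that[OF d])
        fix Q :: "real set set"
        assume "finite Q" "(\<forall>K\<in>Q. \<exists>u v. K = {u..v} \<and> u < v \<and> K \<subseteq> {a..b})"
          "(\<forall>K\<in>Q. \<forall>L\<in>Q. K \<noteq> L \<longrightarrow> interior K \<inter> interior L = {})"
          "(\<Sum>K\<in>Q. Sup K - Inf K) < d"
        then show "(\<Sum>K\<in>Q. norm (f (Sup K) - f (Inf K))) < e'"
          using dH0[rule_format, of Q] by blast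
      qed
    qed
    have Nl: "N \<in> sets lebesgue" using N negligible_imp_measurable fmeasurableD by blast
    obtain U where U: "open U" "N \<subseteq> U" "(U - N) \<in> lmeasurable" "emeasure lebesgue (U - N) < ennreal d"
      using sets_lebesgue_outer_open[OF Nl d] by blast
    have Nlm: "N \<in> lmeasurable" using N negligible_imp_measurable by blast
    have UN: "U = (U - N) \<union> N" using U by blast
    have Ulm: "U \<in> lmeasurable" using U(3) Nlm by (subst UN) (rule fmeasurable.Un)
    have mN: "measure lebesgue N = 0" using N negligible_iff_measure by blast
    have "measure lebesgue U \<le> measure lebesgue (U - N) + measure lebesgue N"
      by (subst UN) (rule measure_Un_le; use U(3) Nlm in auto)
    also have "measure lebesgue (U - N) < d"
      using U(4) U(3) d by (simp add: emeasure_eq_measure2 ennreal_less_iff)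
    finally have mU: "measure lebesgue U < d" using mN by simp
    have ex_r: "\<forall>t. \<exists>r>0. (t \<in> N \<longrightarrow> ball t r \<subseteq> U) \<and>
       (t \<in> {a..b} - N \<longrightarrow> (\<exists>D. norm D \<le> M \<and>
          (\<forall>y. norm (y - t) < r \<longrightarrow> norm (f y - f t - (y - t) *\<^sub>R D) \<le> e' * norm (y - t))))"
    proof
      fix t
      show "\<exists>r>0. (t \<in> N \<longrightarrow> ball t r \<subseteq> U) \<and>
       (t \<in> {a..b} - N \<longrightarrow> (\<exists>D. norm D \<le> M \<and>
          (\<forall>y. norm (y - t) < r \<longrightarrow> norm (f y - f t - (y - t) *\<^sub>R D) \<le> e' * norm (y - t))))"
      proof (cases "t \<in> N")
        case True
        then obtain r where "r > 0" "ball t r \<subseteq> U" using U(1,2) open_contains_ball by blast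
        then show ?thesis using True by blast
      next
        case False
        show ?thesis
        proof (cases "t \<in> {a..b}")
          case False2: False
          show ?thesis by (rule exI[of _ 1]) (use False False2 in auto)
        next
          case True
          with False der obtain D where D: "(f has_vector_derivative D) (at t)" "norm D \<le> M" by blast
          from D(1) have "(f has_derivative (\<lambda>h. h *\<^sub>R D)) (at t)"
            by (simp add: has_vector_derivative_def)
          then obtain r where "r > 0" "\<forall>y. norm (y - t) < r \<longrightarrow> norm (f y - f t - (y - t) *\<^sub>R D) \<le> e' * norm (y - t)"
            using e'0 unfolding has_derivative_at_alt by blast
          then show ?thesis using D(2) False by blast
        qed
      qed
    qed
    from choice[OF ex_r] obtain r where R: "\<forall>t. r t > 0 \<and> (t \<in> N \<longrightarrow> ball t (r t) \<subseteq> U) \<and>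
       (t \<in> {a..b} - N \<longrightarrow> (\<exists>D. norm D \<le> M \<and>
          (\<forall>y. norm (y - t) < r t \<longrightarrow> norm (f y - f t - (y - t) *\<^sub>R D) \<le> e' * norm (y - t))))"
      by (elim exE)
    have r: "\<And>t. r t > 0" using R by simp
    have rN: "\<And>t. t \<in> N \<Longrightarrow> ball t (r t) \<subseteq> U" using R by simp
    have rD: "\<And>t. t \<in> {a..b} - N \<Longrightarrow> (\<exists>D. norm D \<le> M \<and>
          (\<forall>y. norm (y - t) < r t \<longrightarrow> norm (f y - f t - (y - t) *\<^sub>R D) \<le> e' * norm (y - t)))"
      using R by blast
    have g: "gauge (\<lambda>t. ball t (r t))" using r by (intro gauge_ball_dependent) auto
    obtain p where p: "p tagged_division_of {a..b}" and fine: "(\<lambda>t. ball t (r t)) fine p"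
      using fine_division_exists_real[OF g] by blast
    note pD = tagged_division_ofD[OF p]
    have Kform: "\<And>x K. (x, K) \<in> p \<Longrightarrow> \<exists>u v. K = {u..v} \<and> u \<le> x \<and> x \<le> v \<and> a \<le> u \<and> v \<le> b"
    proof -
      fix x K assume xK: "(x, K) \<in> p"
      obtain u v where K: "K = cbox u v" using pD(4)[OF xK] by blast
      have "x \<in> K" using pD(2)[OF xK] .
      then have uv: "u \<le> v" "u \<le> x" "x \<le> v" using K by auto
      have "K \<subseteq> {a..b}" using pD(3)[OF xK] .
      then have "a \<le> u" "v \<le> b" using K uv by auto
      then show "\<exists>u v. K = {u..v} \<and> u \<le> x \<and> x \<le> v \<and> a \<le> u \<and> v \<le> b"
        using K uv by auto
    qed
    have Kball: "\<And>x K. (x, K) \<in> p \<Longrightarrow> K \<subseteq> ball x (r x)"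
      using fine unfolding fine_def by blast
    define g where "g = (\<lambda>(x::real, K::real set). norm (f (Sup K) - f (Inf K)))"
    have "f b - f a = (\<Sum>(x,K)\<in>p. f (Sup K) - f (Inf K))"
      using additive_tagged_division_1[OF ab p, of f] by simp
    then have "norm (f b - f a) \<le> (\<Sum>xK\<in>p. norm ((\<lambda>(x,K). f (Sup K) - f (Inf K)) xK))"
      by (simp add: norm_sum)
    also have "\<dots> = (\<Sum>xK\<in>p. g xK)"
      unfolding g_def by (simp add: split_def)
    also have "\<dots> = (\<Sum>xK\<in>p. if fst xK \<in> N then g xK else 0) + (\<Sum>xK\<in>p. if fst xK \<in> N then 0 else g xK)"
      by (subst sum.distrib[symmetric]) (rule sum.cong; auto)
    also have "(\<Sum>xK\<in>p. if fst xK \<in> N then 0 else g xK) \<le> (\<Sum>xK\<in>p. (M + e') * measure lborel (snd xK))"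
    proof (rule sum_mono)
      fix xK assume xKp: "xK \<in> p"
      obtain x K where xK: "xK = (x, K)" by (cases xK)
      have xKp': "(x, K) \<in> p" using xKp xK by simp
      obtain u v where Kuv: "K = {u..v}" and uvx: "u \<le> x" "x \<le> v" "a \<le> u" "v \<le> b"
        using Kform[OF xKp'] by blast
      have SI: "Sup K = v" "Inf K = u" using Kuv uvx by simp_all
      have Kf: "Inf K \<le> x" "x \<le> Sup K" "a \<le> Inf K" "Sup K \<le> b" using SI uvx by simp_all
      have cK: "measure lborel K = Sup K - Inf K"
        using SI Kuv uvx by simp
      show "(if fst xK \<in> N then 0 else g xK) \<le> (M + e') * measure lborel (snd xK)"
      proof (cases "x \<in> N")
        case True then show ?thesis using xK cK Kf M0 e'0 by simp
      next
        case False
        have "x \<in> {a..b} - N" using Kf False by auto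
        from rD[OF this] obtain D where D: "norm D \<le> M"
          "\<And>y. norm (y - x) < r x \<Longrightarrow> norm (f y - f x - (y - x) *\<^sub>R D) \<le> e' * norm (y - x)" by blast
        have sub: "K \<subseteq> ball x (r x)" using Kball xKp xK by blast
        have "Sup K \<in> K" "Inf K \<in> K" unfolding SI using Kuv uvx by auto
        then have bS: "norm (Sup K - x) < r x" "norm (Inf K - x) < r x"
          using sub by (auto simp: dist_norm norm_minus_commute)
        have E1: "norm (f (Sup K) - f x - (Sup K - x) *\<^sub>R D) \<le> e' * (Sup K - x)"
          using D(2)[OF bS(1)] Kf by simp
        have E2: "norm (f (Inf K) - f x - (Inf K - x) *\<^sub>R D) \<le> e' * (x - Inf K)"
          using D(2)[OF bS(2)] Kf by simp
        have E3: "norm ((Sup K - Inf K) *\<^sub>R D) \<le> M * (Sup K - Inf K)"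
          using D(1) Kf by (simp add: mult_right_mono mult.commute)
        have eq: "f (Sup K) - f (Inf K) = (f (Sup K) - f x - (Sup K - x) *\<^sub>R D)
               - (f (Inf K) - f x - (Inf K - x) *\<^sub>R D) + (Sup K - Inf K) *\<^sub>R D"
          by (simp add: algebra_simps)
        have "norm (f (Sup K) - f (Inf K)) \<le> norm (f (Sup K) - f x - (Sup K - x) *\<^sub>R D)
               + norm (f (Inf K) - f x - (Inf K - x) *\<^sub>R D) + norm ((Sup K - Inf K) *\<^sub>R D)"
          unfolding eq by (meson add_mono norm_triangle_ineq norm_triangle_ineq4 order_refl order_trans)
        also have "\<dots> \<le> e' * (Sup K - x) + e' * (x - Inf K) + M * (Sup K - Inf K)"
          using E1 E2 E3 by linarith
        also have "\<dots> = (M + e') * measure lborel K" unfolding cK by (simp add: algebra_simps)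
        finally show ?thesis using xK False g_def by simp
      qed
    qed
    also have "(\<Sum>xK\<in>p. (M + e') * measure lborel (snd xK)) = (M + e') * (b - a)"
    proof -
      have "(\<Sum>xK\<in>p. measure lborel (snd xK)) = measure lborel (cbox a b)"
        using additive_content_tagged_division[of p a b] p by (simp add: split_def)
      then show ?thesis using ab by (simp add: sum_distrib_left[symmetric])
    qed
    also have "(\<Sum>xK\<in>p. if fst xK \<in> N then g xK else 0) \<le> e'"
    proof -
      define p2 where "p2 = {xK\<in>p. fst xK \<in> N \<and> Inf (snd xK) < Sup (snd xK)}"
      have fp: "finite p" using pD(1) .
      have p2p: "p2 \<subseteq> p" unfolding p2_def by blast
      have "(\<Sum>xK\<in>p. if fst xK \<in> N then g xK else 0) = (\<Sum>xK\<in>p2. g xK)"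
      proof -
        have "(\<Sum>xK\<in>p. if fst xK \<in> N then g xK else 0) = (\<Sum>xK\<in>p. if xK \<in> p2 then g xK else 0)"
        proof (rule sum.cong[OF refl])
          fix xK assume xKp: "xK \<in> p"
          obtain x K where xK: "xK = (x, K)" by (cases xK)
          have xKp': "(x, K) \<in> p" using xKp xK by simp
          obtain u v where Kuv: "K = {u..v}" and uvx: "u \<le> x" "x \<le> v"
            using Kform[OF xKp'] by blast
          have Kf: "Inf K \<le> Sup K" using Kuv uvx by simp
          show "(if fst xK \<in> N then g xK else 0) = (if xK \<in> p2 then g xK else 0)"
          proof (cases "Inf K < Sup K")
            case True then show ?thesis using xKp xK unfolding p2_def by auto
          next
            case False
            then have "Inf K = Sup K" using Kf by simp
            then show ?thesis using xK unfolding g_def p2_def by auto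
          qed
        qed
        also have "\<dots> = (\<Sum>xK\<in>p2. g xK)"
          using sum.inter_restrict[OF fp, of g p2] p2p by (simp add: Int_absorb1 inf.absorb2)
        finally show ?thesis .
      qed
      also have "\<dots> < e'"
      proof -
        have inj: "inj_on snd p2"
        proof (rule inj_onI)
          fix xK yL assume A: "xK \<in> p2" "yL \<in> p2" "snd xK = snd yL"
          show "xK = yL"
          proof (rule ccontr)
            assume ne: "xK \<noteq> yL"
            obtain x K where xK: "xK = (x, K)" by (cases xK)
            obtain y L where yL: "yL = (y, L)" by (cases yL)
            have in1: "(x, K) \<in> p" "(y, L) \<in> p" using A xK yL p2p by auto
            have "interior K \<inter> interior L = {}"
              using pD(5)[OF in1] ne xK yL by auto
            moreover have "K = L" using A xK yL by simp
            moreover obtain u v where Kuv: "K = {u..v}" "u \<le> x" "x \<le> v" using Kform[OF in1(1)] by blast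
            moreover have "Inf K < Sup K" using A xK unfolding p2_def by simp
            ultimately show False by auto
          qed
        qed
        define Q where "Q = snd ` p2"
        have sumQ: "\<And>h. (\<Sum>K\<in>Q. h K) = (\<Sum>xK\<in>p2. h (snd xK))"
          unfolding Q_def using sum.reindex[OF inj] by (simp add: comp_def)
        have Qsub: "Q \<subseteq> snd ` p" unfolding Q_def using p2p by blast
        have divp: "(snd ` p) division_of {a..b}" using division_of_tagged_division[OF p] .
        have divQ: "Q division_of \<Union>Q"
          by (rule division_of_subset[OF _ Qsub]) (use divp division_ofD(6) in metis)
        have "(\<Sum>K\<in>Q. norm (f (Sup K) - f (Inf K))) < e'"
        proof (rule dH)
          show "finite Q" unfolding Q_def using fp p2p finite_subset by blast
          show "\<forall>K\<in>Q. \<exists>u v. K = {u..v} \<and> u < v \<and> K \<subseteq> {a..b}"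
          proof
            fix K assume "K \<in> Q"
            then obtain x where "(x, K) \<in> p2" unfolding Q_def by force
            then have xp: "(x, K) \<in> p" and IS: "Inf K < Sup K" unfolding p2_def by auto
            obtain u v where Kuv: "K = {u..v}" "a \<le> u" "v \<le> b" "u \<le> x" "x \<le> v" using Kform[OF xp] by blast
            then have "u < v" using IS by auto
            then show "\<exists>u v. K = {u..v} \<and> u < v \<and> K \<subseteq> {a..b}" using Kuv by auto
          qed
          show "\<forall>K\<in>Q. \<forall>L\<in>Q. K \<noteq> L \<longrightarrow> interior K \<inter> interior L = {}"
            using divQ division_ofD(5) by blast
          have "(\<Sum>K\<in>Q. Sup K - Inf K) = (\<Sum>K\<in>Q. measure lebesgue K)"
          proof (rule sum.cong[OF refl])
            fix K assume "K \<in> Q"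
            then obtain x where "(x, K) \<in> p" unfolding Q_def p2_def by force
            then obtain u v where Kuv: "K = {u..v}" "u \<le> x" "x \<le> v" using Kform by blast
            then show "Sup K - Inf K = measure lebesgue K" by simp
          qed
          also have "\<dots> = measure lebesgue (\<Union>Q)" using content_division[OF divQ] .
          also have "\<dots> \<le> measure lebesgue U"
          proof (rule measure_mono_fmeasurable)
            show "\<Union>Q \<subseteq> U"
            proof
              fix z assume "z \<in> \<Union>Q"
              then obtain K where "K \<in> Q" "z \<in> K" by blast
              then obtain x where xK: "(x, K) \<in> p2" unfolding Q_def by force
              then have "(x, K) \<in> p" "x \<in> N" unfolding p2_def by auto
              then show "z \<in> U" using Kball rN \<open>z \<in> K\<close> by blast
            qed
            show "\<Union>Q \<in> sets lebesgue" using lmeasurable_division[OF divQ] by blast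
            show "U \<in> fmeasurable lebesgue" using Ulm .
          qed
          finally show "(\<Sum>K\<in>Q. Sup K - Inf K) < d" using mU by linarith
        qed
        then show ?thesis unfolding sumQ g_def by (simp add: split_def)
      qed
      finally show ?thesis by simp
    qed
    finally have "norm (f b - f a) \<le> e' + (M + e') * (b - a)" by simp
    also have "\<dots> = M * (b - a) + e" using e'e by (simp add: algebra_simps)
    finally show "norm (f b - f a) \<le> M * (b - a) + e" .
  qed
qed


lemma ac_cong:
  assumes "abs_cont_on a b f" "\<And>t. t \<in> {a..b} \<Longrightarrow> f t = g t"
  shows "abs_cont_on a b g"
  unfolding abs_cont_on_def
proof (intro allI impI)
  fix e :: real assume e: "e > 0"
  from assms(1)[unfolded abs_cont_on_def, rule_format, OF e]
  obtain d where d: "d > 0" and H: "\<forall>(n::nat) (s::nat \<Rightarrow> real) (t::nat \<Rightarrow> real).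
        (\<forall>i<n. a \<le> s i \<and> s i \<le> t i \<and> t i \<le> b) \<and>
        (\<forall>i<n. \<forall>j<n. i \<noteq> j \<longrightarrow> t i \<le> s j \<or> t j \<le> s i) \<and>
        (\<Sum>i<n. t i - s i) < d \<longrightarrow> (\<Sum>i<n. norm (f (t i) - f (s i))) < e" by (elim exE conjE)
  show "\<exists>d>0. \<forall>(n::nat) (s::nat \<Rightarrow> real) (t::nat \<Rightarrow> real).
        (\<forall>i<n. a \<le> s i \<and> s i \<le> t i \<and> t i \<le> b) \<and>
        (\<forall>i<n. \<forall>j<n. i \<noteq> j \<longrightarrow> t i \<le> s j \<or> t j \<le> s i) \<and>
        (\<Sum>i<n. t i - s i) < d \<longrightarrow> (\<Sum>i<n. norm (g (t i) - g (s i))) < e"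
  proof (intro exI[of _ d] conjI allI impI)
    show "d > 0" by fact
    fix n :: nat and s t :: "nat \<Rightarrow> real"
    assume A: "(\<forall>i<n. a \<le> s i \<and> s i \<le> t i \<and> t i \<le> b) \<and>
        (\<forall>i<n. \<forall>j<n. i \<noteq> j \<longrightarrow> t i \<le> s j \<or> t j \<le> s i) \<and> (\<Sum>i<n. t i - s i) < d"
    have "(\<Sum>i<n. norm (g (t i) - g (s i))) = (\<Sum>i<n. norm (f (t i) - f (s i)))"
    proof (rule sum.cong[OF refl])
      fix i assume "i \<in> {..<n}"
      then have "s i \<in> {a..b}" "t i \<in> {a..b}" using A by auto
      then show "norm (g (t i) - g (s i)) = norm (f (t i) - f (s i))" using assms(2) by simp
    qed
    also have "\<dots> < e" using H A by blast
    finally show "(\<Sum>i<n. norm (g (t i) - g (s i))) < e" .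
  qed
qed

lemma ac_sub:
  assumes "abs_cont_on a b f" "a \<le> a'" "b' \<le> b"
  shows "abs_cont_on a' b' f"
  unfolding abs_cont_on_def
proof (intro allI impI)
  fix e :: real assume e: "e > 0"
  from assms(1)[unfolded abs_cont_on_def, rule_format, OF e]
  obtain d where d: "d > 0" and H: "\<forall>(n::nat) (s::nat \<Rightarrow> real) (t::nat \<Rightarrow> real).
        (\<forall>i<n. a \<le> s i \<and> s i \<le> t i \<and> t i \<le> b) \<and>
        (\<forall>i<n. \<forall>j<n. i \<noteq> j \<longrightarrow> t i \<le> s j \<or> t j \<le> s i) \<and>
        (\<Sum>i<n. t i - s i) < d \<longrightarrow> (\<Sum>i<n. norm (f (t i) - f (s i))) < e" by (elim exE conjE)
  show "\<exists>d>0. \<forall>(n::nat) (s::nat \<Rightarrow> real) (t::nat \<Rightarrow> real).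
        (\<forall>i<n. a' \<le> s i \<and> s i \<le> t i \<and> t i \<le> b') \<and>
        (\<forall>i<n. \<forall>j<n. i \<noteq> j \<longrightarrow> t i \<le> s j \<or> t j \<le> s i) \<and>
        (\<Sum>i<n. t i - s i) < d \<longrightarrow> (\<Sum>i<n. norm (f (t i) - f (s i))) < e"
  proof (intro exI[of _ d] conjI allI impI)
    show "d > 0" by fact
    fix n :: nat and s t :: "nat \<Rightarrow> real"
    assume A: "(\<forall>i<n. a' \<le> s i \<and> s i \<le> t i \<and> t i \<le> b') \<and>
        (\<forall>i<n. \<forall>j<n. i \<noteq> j \<longrightarrow> t i \<le> s j \<or> t j \<le> s i) \<and> (\<Sum>i<n. t i - s i) < d"
    have "\<forall>i<n. a \<le> s i \<and> s i \<le> t i \<and> t i \<le> b" using A assms(2,3) by force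
    then show "(\<Sum>i<n. norm (f (t i) - f (s i))) < e" using H A by blast
  qed
qed

lemma ac_dominated:
  fixes f1 :: "real \<Rightarrow> 'b::real_normed_vector" and f2 :: "real \<Rightarrow> 'c::real_normed_vector"
    and g :: "real \<Rightarrow> 'd::real_normed_vector"
  assumes ac1: "abs_cont_on a b f1" and ac2: "abs_cont_on a b f2" and K: "K \<ge> 0"
    and dom: "\<And>s t. s \<in> {a..b} \<Longrightarrow> t \<in> {a..b} \<Longrightarrow>
       norm (g t - g s) \<le> K * (norm (f1 t - f1 s) + norm (f2 t - f2 s) + \<bar>t - s\<bar>)"
  shows "abs_cont_on a b g"
  unfolding abs_cont_on_def
proof (intro allI impI)
  fix e :: real assume e: "e > 0"
  define e' where "e' = e / (3 * (K + 1))"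
  have e'0: "e' > 0" using e K unfolding e'_def by simp
  have e'e: "3 * (K + 1) * e' = e" using K unfolding e'_def by simp
  from ac1[unfolded abs_cont_on_def, rule_format, OF e'0]
  obtain d1 where d1: "d1 > 0" and H1: "\<forall>(n::nat) (s::nat \<Rightarrow> real) (t::nat \<Rightarrow> real).
        (\<forall>i<n. a \<le> s i \<and> s i \<le> t i \<and> t i \<le> b) \<and>
        (\<forall>i<n. \<forall>j<n. i \<noteq> j \<longrightarrow> t i \<le> s j \<or> t j \<le> s i) \<and>
        (\<Sum>i<n. t i - s i) < d1 \<longrightarrow> (\<Sum>i<n. norm (f1 (t i) - f1 (s i))) < e'" by (elim exE conjE)
  from ac2[unfolded abs_cont_on_def, rule_format, OF e'0]
  obtain d2 where d2: "d2 > 0" and H2: "\<forall>(n::nat) (s::nat \<Rightarrow> real) (t::nat \<Rightarrow> real).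
        (\<forall>i<n. a \<le> s i \<and> s i \<le> t i \<and> t i \<le> b) \<and>
        (\<forall>i<n. \<forall>j<n. i \<noteq> j \<longrightarrow> t i \<le> s j \<or> t j \<le> s i) \<and>
        (\<Sum>i<n. t i - s i) < d2 \<longrightarrow> (\<Sum>i<n. norm (f2 (t i) - f2 (s i))) < e'" by (elim exE conjE)
  define d where "d = min (min d1 d2) e'"
  show "\<exists>d>0. \<forall>(n::nat) (s::nat \<Rightarrow> real) (t::nat \<Rightarrow> real).
        (\<forall>i<n. a \<le> s i \<and> s i \<le> t i \<and> t i \<le> b) \<and>
        (\<forall>i<n. \<forall>j<n. i \<noteq> j \<longrightarrow> t i \<le> s j \<or> t j \<le> s i) \<and>
        (\<Sum>i<n. t i - s i) < d \<longrightarrow> (\<Sum>i<n. norm (g (t i) - g (s i))) < e"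
  proof (intro exI[of _ d] conjI allI impI)
    show "d > 0" using d1 d2 e'0 unfolding d_def by simp
    fix n :: nat and s t :: "nat \<Rightarrow> real"
    assume A: "(\<forall>i<n. a \<le> s i \<and> s i \<le> t i \<and> t i \<le> b) \<and>
        (\<forall>i<n. \<forall>j<n. i \<noteq> j \<longrightarrow> t i \<le> s j \<or> t j \<le> s i) \<and> (\<Sum>i<n. t i - s i) < d"
    have S1: "(\<Sum>i<n. norm (f1 (t i) - f1 (s i))) < e'" using H1 A unfolding d_def by auto
    have S2: "(\<Sum>i<n. norm (f2 (t i) - f2 (s i))) < e'" using H2 A unfolding d_def by auto
    have S3: "(\<Sum>i<n. \<bar>t i - s i\<bar>) < e'"
    proof -
      have "(\<Sum>i<n. \<bar>t i - s i\<bar>) = (\<Sum>i<n. t i - s i)"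
        by (rule sum.cong[OF refl]) (use A in auto)
      also have "\<dots> < e'" using A unfolding d_def by auto
      finally show ?thesis .
    qed
    have "(\<Sum>i<n. norm (g (t i) - g (s i))) \<le>
        (\<Sum>i<n. K * (norm (f1 (t i) - f1 (s i)) + norm (f2 (t i) - f2 (s i)) + \<bar>t i - s i\<bar>))"
    proof (rule sum_mono)
      fix i assume "i \<in> {..<n}"
      then have "s i \<in> {a..b}" "t i \<in> {a..b}" using A by auto
      then show "norm (g (t i) - g (s i)) \<le> K * (norm (f1 (t i) - f1 (s i)) + norm (f2 (t i) - f2 (s i)) + \<bar>t i - s i\<bar>)"
        using dom by blast
    qed
    also have "\<dots> = K * ((\<Sum>i<n. norm (f1 (t i) - f1 (s i))) + (\<Sum>i<n. norm (f2 (t i) - f2 (s i))) + (\<Sum>i<n. \<bar>t i - s i\<bar>))"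
      by (simp add: sum_distrib_left sum.distrib distrib_left)
    also have "\<dots> \<le> K * (3 * e')" using S1 S2 S3 K by (intro mult_left_mono) auto
    also have "\<dots> < e" using e'e e'0 K by (simp add: algebra_simps)
    finally show "(\<Sum>i<n. norm (g (t i) - g (s i))) < e" .
  qed
qed

lemma ac_const: "abs_cont_on a b (\<lambda>t. c)"
  unfolding abs_cont_on_def by (auto intro: exI[of _ 1])

lemma ac_lipschitz:
  fixes g :: "real \<Rightarrow> 'd::real_normed_vector"
  assumes "K \<ge> 0" "\<And>s t. s \<in> {a..b} \<Longrightarrow> t \<in> {a..b} \<Longrightarrow> norm (g t - g s) \<le> K * \<bar>t - s\<bar>"
  shows "abs_cont_on a b g"
  by (rule ac_dominated[OF ac_const[of a b 0] ac_const[of a b 0] assms(1)]) (use assms(2) in simp)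

lemma ac_glue:
  fixes f :: "real \<Rightarrow> 'a::real_normed_vector"
  assumes ac1: "abs_cont_on a m f" and ac2: "abs_cont_on m b f" and am: "a \<le> m" and mb: "m \<le> b"
  shows "abs_cont_on a b f"
  unfolding abs_cont_on_def
proof (intro allI impI)
  fix e :: real assume e: "e > 0"
  have e2: "e / 2 > 0" using e by simp
  from ac1[unfolded abs_cont_on_def, rule_format, OF e2]
  obtain d1 where d1: "d1 > 0" and H1: "\<forall>(n::nat) (s::nat \<Rightarrow> real) (t::nat \<Rightarrow> real).
        (\<forall>i<n. a \<le> s i \<and> s i \<le> t i \<and> t i \<le> m) \<and>
        (\<forall>i<n. \<forall>j<n. i \<noteq> j \<longrightarrow> t i \<le> s j \<or> t j \<le> s i) \<and>
        (\<Sum>i<n. t i - s i) < d1 \<longrightarrow> (\<Sum>i<n. norm (f (t i) - f (s i))) < e/2" by (elim exE conjE)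
  from ac2[unfolded abs_cont_on_def, rule_format, OF e2]
  obtain d2 where d2: "d2 > 0" and H2: "\<forall>(n::nat) (s::nat \<Rightarrow> real) (t::nat \<Rightarrow> real).
        (\<forall>i<n. m \<le> s i \<and> s i \<le> t i \<and> t i \<le> b) \<and>
        (\<forall>i<n. \<forall>j<n. i \<noteq> j \<longrightarrow> t i \<le> s j \<or> t j \<le> s i) \<and>
        (\<Sum>i<n. t i - s i) < d2 \<longrightarrow> (\<Sum>i<n. norm (f (t i) - f (s i))) < e/2" by (elim exE conjE)
  show "\<exists>d>0. \<forall>(n::nat) (s::nat \<Rightarrow> real) (t::nat \<Rightarrow> real).
        (\<forall>i<n. a \<le> s i \<and> s i \<le> t i \<and> t i \<le> b) \<and>
        (\<forall>i<n. \<forall>j<n. i \<noteq> j \<longrightarrow> t i \<le> s j \<or> t j \<le> s i) \<and>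
        (\<Sum>i<n. t i - s i) < d \<longrightarrow> (\<Sum>i<n. norm (f (t i) - f (s i))) < e"
  proof (intro exI[of _ "min d1 d2"] conjI allI impI)
    show "min d1 d2 > 0" using d1 d2 by simp
    fix n :: nat and s t :: "nat \<Rightarrow> real"
    assume A: "(\<forall>i<n. a \<le> s i \<and> s i \<le> t i \<and> t i \<le> b) \<and>
        (\<forall>i<n. \<forall>j<n. i \<noteq> j \<longrightarrow> t i \<le> s j \<or> t j \<le> s i) \<and> (\<Sum>i<n. t i - s i) < min d1 d2"
    define s1 where "s1 i = min (s i) m" for i
    define t1 where "t1 i = min (t i) m" for i
    define s2 where "s2 i = max (s i) m" for i
    define t2 where "t2 i = max (t i) m" for i
    have ord: "\<forall>i<n. s i \<le> t i" using A by auto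
    have len: "\<And>i. i < n \<Longrightarrow> t1 i - s1 i \<le> t i - s i \<and> t2 i - s2 i \<le> t i - s i"
      using ord unfolding s1_def t1_def s2_def t2_def by (auto simp: min_def max_def)
    have nrm: "\<And>i. i < n \<Longrightarrow> norm (f (t i) - f (s i)) \<le> norm (f (t1 i) - f (s1 i)) + norm (f (t2 i) - f (s2 i))"
    proof -
      fix i assume i: "i < n"
      show "norm (f (t i) - f (s i)) \<le> norm (f (t1 i) - f (s1 i)) + norm (f (t2 i) - f (s2 i))"
      proof (cases "t i \<le> m")
        case True
        moreover have "s i \<le> t i" using ord i by simp
        ultimately show ?thesis unfolding s1_def t1_def s2_def t2_def by (simp add: min_def max_def)
      next
        case F1: False
        show ?thesis
        proof (cases "s i \<ge> m")
          case True
          moreover have "s i \<le> t i" using ord i by simp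
          ultimately show ?thesis using F1 unfolding s1_def t1_def s2_def t2_def by (simp add: min_def max_def)
        next
          case False
          then have "t1 i = m" "s1 i = s i" "t2 i = t i" "s2 i = m"
            using F1 unfolding s1_def t1_def s2_def t2_def by (auto simp: min_def max_def)
          moreover have "f (t i) - f (s i) = (f m - f (s i)) + (f (t i) - f m)" by simp
          ultimately show ?thesis using norm_triangle_ineq[of "f m - f (s i)" "f (t i) - f m"] by (simp add: add.commute)
        qed
      qed
    qed
    have sl: "(\<Sum>i<n. t1 i - s1 i) < d1"
    proof -
      have "(\<Sum>i<n. t1 i - s1 i) \<le> (\<Sum>i<n. t i - s i)" using len by (intro sum_mono) auto
      then show ?thesis using A by linarith
    qed
    have sr: "(\<Sum>i<n. t2 i - s2 i) < d2"
    proof -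
      have "(\<Sum>i<n. t2 i - s2 i) \<le> (\<Sum>i<n. t i - s i)" using len by (intro sum_mono) auto
      then show ?thesis using A by linarith
    qed
    have B1: "\<forall>i<n. a \<le> s1 i \<and> s1 i \<le> t1 i \<and> t1 i \<le> m"
    proof (intro allI impI)
      fix i assume "i < n"
      then have "a \<le> s i" "s i \<le> t i" "t i \<le> b" using A by auto
      then show "a \<le> s1 i \<and> s1 i \<le> t1 i \<and> t1 i \<le> m" unfolding s1_def t1_def using am by (auto simp: min_def)
    qed
    have B2: "\<forall>i<n. m \<le> s2 i \<and> s2 i \<le> t2 i \<and> t2 i \<le> b"
    proof (intro allI impI)
      fix i assume "i < n"
      then have "a \<le> s i" "s i \<le> t i" "t i \<le> b" using A by auto
      then show "m \<le> s2 i \<and> s2 i \<le> t2 i \<and> t2 i \<le> b" unfolding s2_def t2_def using mb by (auto simp: max_def)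
    qed
    have D1: "\<forall>i<n. \<forall>j<n. i \<noteq> j \<longrightarrow> t1 i \<le> s1 j \<or> t1 j \<le> s1 i"
    proof (intro allI impI)
      fix i j assume "i < n" "j < n" "i \<noteq> j"
      then have "t i \<le> s j \<or> t j \<le> s i" using A by blast
      then show "t1 i \<le> s1 j \<or> t1 j \<le> s1 i" unfolding s1_def t1_def by (auto simp: min_def)
    qed
    have D2: "\<forall>i<n. \<forall>j<n. i \<noteq> j \<longrightarrow> t2 i \<le> s2 j \<or> t2 j \<le> s2 i"
    proof (intro allI impI)
      fix i j assume "i < n" "j < n" "i \<noteq> j"
      then have "t i \<le> s j \<or> t j \<le> s i" using A by blast
      then show "t2 i \<le> s2 j \<or> t2 j \<le> s2 i" unfolding s2_def t2_def by (auto simp: max_def)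
    qed
    have "(\<Sum>i<n. norm (f (t1 i) - f (s1 i))) < e/2" using H1 B1 D1 sl by blast
    moreover have "(\<Sum>i<n. norm (f (t2 i) - f (s2 i))) < e/2" using H2 B2 D2 sr by blast
    moreover have "(\<Sum>i<n. norm (f (t i) - f (s i))) \<le> (\<Sum>i<n. norm (f (t1 i) - f (s1 i))) + (\<Sum>i<n. norm (f (t2 i) - f (s2 i)))"
      unfolding sum.distrib[symmetric] by (rule sum_mono) (use nrm in simp)
    ultimately show "(\<Sum>i<n. norm (f (t i) - f (s i))) < e" by linarith
  qed
qed

lemma ac_continuous:
  fixes f :: "real \<Rightarrow> 'a::real_normed_vector"
  assumes ac: "abs_cont_on a b f"
  shows "continuous_on {a..b} f"
  unfolding continuous_on_iff
proof (intro ballI allI impI)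
  fix x e :: real assume x: "x \<in> {a..b}" and e: "e > 0"
  from ac[unfolded abs_cont_on_def, rule_format, OF e]
  obtain d where d: "d > 0" and H: "\<forall>(n::nat) (s::nat \<Rightarrow> real) (t::nat \<Rightarrow> real).
        (\<forall>i<n. a \<le> s i \<and> s i \<le> t i \<and> t i \<le> b) \<and>
        (\<forall>i<n. \<forall>j<n. i \<noteq> j \<longrightarrow> t i \<le> s j \<or> t j \<le> s i) \<and>
        (\<Sum>i<n. t i - s i) < d \<longrightarrow> (\<Sum>i<n. norm (f (t i) - f (s i))) < e" by (elim exE conjE)
  show "\<exists>d>0. \<forall>x'\<in>{a..b}. dist x' x < d \<longrightarrow> dist (f x') (f x) < e"
  proof (intro exI[of _ d] conjI ballI impI)
    show "d > 0" by fact
    fix y assume y: "y \<in> {a..b}" and dy: "dist y x < d"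
    define s where "s = (\<lambda>i::nat. min x y)"
    define t where "t = (\<lambda>i::nat. max x y)"
    have "(\<Sum>i<(1::nat). norm (f (t i) - f (s i))) < e"
    proof (rule H[rule_format], intro conjI)
      show "\<forall>i<1. a \<le> s i \<and> s i \<le> t i \<and> t i \<le> b" using x y unfolding s_def t_def by auto
      show "\<forall>i<1. \<forall>j<1. i \<noteq> j \<longrightarrow> t i \<le> s j \<or> t j \<le> s i" by auto
      show "(\<Sum>i<(1::nat). t i - s i) < d" using dy unfolding s_def t_def dist_real_def by (auto simp: min_def max_def)
    qed
    then have "norm (f (max x y) - f (min x y)) < e" unfolding s_def t_def by simp
    then show "dist (f y) (f x) < e"
      by (cases "x \<le> y") (auto simp: dist_norm norm_minus_commute min_def max_def)
  qed
qed


definition mv :: "R3 \<Rightarrow> real \<Rightarrow> real \<Rightarrow> real \<Rightarrow> R3" where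
  "mv p d1 d2 s = (fst p + d1 * s, fst (snd p) + d2 * s,
                   snd (snd p) + s * (d2 * fst p - d1 * fst (snd p)) / 2)"

lemma mv_0[simp]: "mv p d1 d2 0 = p"
  by (simp add: mv_def)

lemma inner_X1: "(a::R3) \<bullet> X1 p = fst a - snd (snd a) * fst (snd p) / 2"
  by (cases a; cases p) (simp add: X1_def)

lemma inner_X2: "(a::R3) \<bullet> X2 p = fst (snd a) + snd (snd a) * fst p / 2"
  by (cases a; cases p) (simp add: X2_def)

lemma field_eq: "d1 *\<^sub>R X1 p + d2 *\<^sub>R X2 p = (d1, d2, (d2 * fst p - d1 * fst (snd p)) / 2)"
  by (cases p) (simp add: X1_def X2_def algebra_simps add_divide_distrib diff_divide_distrib)

lemma hvd_linear:
  assumes "(f has_vector_derivative f') (at t)" "bounded_linear L"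
  shows "((\<lambda>t. L (f t)) has_vector_derivative L f') (at t)"
proof -
  have "((\<lambda>t. L (f t)) has_derivative (\<lambda>h. L (h *\<^sub>R f'))) (at t)"
    using bounded_linear.has_derivative[OF assms(2) assms(1)[unfolded has_vector_derivative_def]] .
  then show ?thesis unfolding has_vector_derivative_def
    using linear_simps(5)[OF assms(2)] by simp
qed

lemma mv_deriv:
  "((\<lambda>t. mv p d1 d2 (t - r)) has_vector_derivative
     (d1 *\<^sub>R X1 (mv p d1 d2 (t - r)) + d2 *\<^sub>R X2 (mv p d1 d2 (t - r)))) (at t)"
proof -
  have "((\<lambda>t. mv p d1 d2 (t - r)) has_vector_derivative
     (d1, d2, (d2 * fst p - d1 * fst (snd p)) / 2)) (at t)"
    unfolding mv_def
    by (intro has_vector_derivative_Pair)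
       (auto intro!: derivative_eq_intros simp: has_real_derivative_iff_has_vector_derivative[symmetric])
  moreover have "d1 *\<^sub>R X1 (mv p d1 d2 (t - r)) + d2 *\<^sub>R X2 (mv p d1 d2 (t - r)) =
      (d1, d2, (d2 * fst p - d1 * fst (snd p)) / 2)"
    unfolding field_eq by (simp add: mv_def algebra_simps)
  ultimately show ?thesis by simp
qed

lemma norm_R3_le: "norm ((a, b, c) :: R3) \<le> \<bar>a\<bar> + \<bar>b\<bar> + \<bar>c\<bar>"
proof -
  have "norm ((a, b, c) :: R3) \<le> norm a + norm (b, c)" by (rule norm_Pair_le)
  also have "norm (b, c) \<le> norm b + norm c" by (rule norm_Pair_le)
  finally show ?thesis by simp
qed

lemma mv_lip:
  "norm (mv p d1 d2 (t - r) - mv p d1 d2 (s - r)) \<le>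
     (\<bar>d1\<bar> + \<bar>d2\<bar> + \<bar>d2 * fst p - d1 * fst (snd p)\<bar>) * \<bar>t - s\<bar>"
proof -
  have eq: "mv p d1 d2 (t - r) - mv p d1 d2 (s - r) =
     (d1 * (t - s), d2 * (t - s), (t - s) * (d2 * fst p - d1 * fst (snd p)) / 2)"
    by (simp add: mv_def field_simps)
  have "norm (mv p d1 d2 (t - r) - mv p d1 d2 (s - r)) \<le>
     \<bar>d1 * (t - s)\<bar> + \<bar>d2 * (t - s)\<bar> + \<bar>(t - s) * (d2 * fst p - d1 * fst (snd p)) / 2\<bar>"
    unfolding eq by (rule norm_R3_le)
  also have "\<dots> \<le> (\<bar>d1\<bar> + \<bar>d2\<bar> + \<bar>d2 * fst p - d1 * fst (snd p)\<bar>) * \<bar>t - s\<bar>"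
  proof -
    have e1: "\<bar>d1 * (t - s)\<bar> = \<bar>d1\<bar> * \<bar>t - s\<bar>" "\<bar>d2 * (t - s)\<bar> = \<bar>d2\<bar> * \<bar>t - s\<bar>"
      by (simp_all add: abs_mult)
    have e2: "\<bar>(t - s) * (d2 * fst p - d1 * fst (snd p)) / 2\<bar> = \<bar>t - s\<bar> * \<bar>d2 * fst p - d1 * fst (snd p)\<bar> / 2"
      by (simp add: abs_mult)
    have "0 \<le> \<bar>t - s\<bar> * \<bar>d2 * fst p - d1 * fst (snd p)\<bar>" by simp
    then show ?thesis unfolding e1 e2 by (simp add: algebra_simps)
  qed
  finally show ?thesis .
qed

lemma ac_mv: "abs_cont_on a b (\<lambda>t. mv p d1 d2 (t - r))"
  by (rule ac_lipschitz[OF _ mv_lip]) simp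

lemma const_sign:
  fixes f :: "real \<Rightarrow> real"
  assumes cont: "continuous_on {l..r} f" and nz: "\<forall>t\<in>{l<..<r}. f t \<noteq> 0"
    and s: "s \<in> {l<..<r}" and t: "t \<in> {l<..<r}"
  shows "sgn (f s) = sgn (f t)"
proof -
  have key: "sgn (f x) = sgn (f y)" if xy: "x \<le> y" "x \<in> {l<..<r}" "y \<in> {l<..<r}" for x y
  proof (rule ccontr)
    assume ne: "sgn (f x) \<noteq> sgn (f y)"
    have "{x..y} \<subseteq> {l..r}" using xy by auto
    then have cxy: "continuous_on {x..y} f" using cont continuous_on_subset by blast
    have fx: "f x \<noteq> 0" "f y \<noteq> 0" using nz xy by auto
    have "(f x < 0 \<and> 0 < f y) \<or> (f y < 0 \<and> 0 < f x)"
      using ne fx by (auto simp: sgn_if split: if_splits)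
    then obtain z where z: "x \<le> z" "z \<le> y" "f z = 0"
      using IVT'[of f x 0 y] IVT2'[of f y 0 x] cxy xy(1) by force
    then have "z \<in> {l<..<r}" using xy by auto
    with z nz show False by blast
  qed
  show ?thesis
  proof (cases "s \<le> t")
    case True then show ?thesis using key s t by blast
  next
    case False then show ?thesis using key[of t s] s t by simp
  qed
qed


lemma norm_proj12: "norm (fst v, fst (snd v)) \<le> 2 * norm (v::R3)"
proof -
  have "norm (fst v, fst (snd v)) \<le> norm (fst v) + norm (fst (snd v))" by (rule norm_Pair_le)
  moreover have "norm (fst v) \<le> norm v" by (metis norm_fst_le prod.collapse)
  moreover have "norm (fst (snd v)) \<le> norm v"
    by (metis norm_fst_le norm_snd_le order_trans prod.collapse)
  ultimately show ?thesis by simp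
qed

lemma bl_proj12: "bounded_linear (\<lambda>v::R3. (fst v, fst (snd v)))"
  by (intro bounded_linear_Pair bounded_linear_fst bounded_linear_compose[OF bounded_linear_fst bounded_linear_snd])

locale ctx =
  fixes T :: real and \<gamma> :: "real \<Rightarrow> R3" and u1 u2 :: "real \<Rightarrow> real" and N :: "real set"
    and P1 P2 :: "real \<Rightarrow> real" and A0 B0 c l0 :: real
  assumes acg: "abs_cont_on 0 T \<gamma>"
    and N: "negligible N"
    and der: "\<And>t. t \<in> {0..T} - N \<Longrightarrow> (\<gamma> has_vector_derivative (u1 t *\<^sub>R X1 (\<gamma> t) + u2 t *\<^sub>R X2 (\<gamma> t))) (at t)"
    and sg1: "\<And>t. t \<in> {0..T} - N \<Longrightarrow> P1 t \<noteq> 0 \<Longrightarrow> P2 t \<noteq> 0 \<Longrightarrow> u1 t = sgn (P1 t)"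
    and sg2: "\<And>t. t \<in> {0..T} - N \<Longrightarrow> P1 t \<noteq> 0 \<Longrightarrow> P2 t \<noteq> 0 \<Longrightarrow> u2 t = sgn (P2 t)"
    and P1: "\<And>t. t \<in> {0..T} \<Longrightarrow> P1 t = A0 - c * fst (snd (\<gamma> t))"
    and P2: "\<And>t. t \<in> {0..T} \<Longrightarrow> P2 t = B0 + c * fst (\<gamma> t)"
    and nrm: "\<And>t. t \<in> {0..T} \<Longrightarrow> \<bar>P1 t\<bar> + \<bar>P2 t\<bar> = l0"
    and l0: "l0 > 0"
begin

lemma cont_g: "continuous_on {0..T} \<gamma>"
  using ac_continuous[OF acg] .

lemma cont_P1: "continuous_on {l..r} P1" if "0 \<le> l" "r \<le> T"
proof -
  have "continuous_on {l..r} (\<lambda>t. A0 - c * fst (snd (\<gamma> t)))"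
    using continuous_on_subset[OF cont_g, of "{l..r}"] that
    by (intro continuous_intros) auto
  then show ?thesis by (rule continuous_on_eq) (use that P1 in auto)
qed

lemma cont_P2: "continuous_on {l..r} P2" if "0 \<le> l" "r \<le> T"
proof -
  have "continuous_on {l..r} (\<lambda>t. B0 + c * fst (\<gamma> t))"
    using continuous_on_subset[OF cont_g, of "{l..r}"] that
    by (intro continuous_intros) auto
  then show ?thesis by (rule continuous_on_eq) (use that P2 in auto)
qed

lemma gap:
  assumes l: "0 \<le> l" and lr: "l < r" and r: "r \<le> T" and nz: "\<forall>t\<in>{l<..<r}. P1 t \<noteq> 0 \<and> P2 t \<noteq> 0"
  obtains d1 d2 where "d1 = 1 \<or> d1 = -1" "d2 = 1 \<or> d2 = -1"
    "\<And>t. t \<in> {l<..<r} \<Longrightarrow> sgn (P1 t) = d1 \<and> sgn (P2 t) = d2"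
    "\<And>t. t \<in> {l..r} \<Longrightarrow> \<gamma> t = mv (\<gamma> l) d1 d2 (t - l)"
proof -
  define m where "m = (l + r) / 2"
  have m: "m \<in> {l<..<r}" using lr unfolding m_def by auto
  define d1 where "d1 = sgn (P1 m)"
  define d2 where "d2 = sgn (P2 m)"
  have d1: "d1 = 1 \<or> d1 = -1" using nz m unfolding d1_def by (auto simp: sgn_if)
  have d2: "d2 = 1 \<or> d2 = -1" using nz m unfolding d2_def by (auto simp: sgn_if)
  have sgns: "sgn (P1 t) = d1 \<and> sgn (P2 t) = d2" if t: "t \<in> {l<..<r}" for t
  proof
    show "sgn (P1 t) = d1" unfolding d1_def
      by (rule const_sign[OF cont_P1[OF l r] _ t m]) (use nz in blast)
    show "sgn (P2 t) = d2" unfolding d2_def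
      by (rule const_sign[OF cont_P2[OF l r] _ t m]) (use nz in blast)
  qed
  have uu: "u1 t = d1 \<and> u2 t = d2" if "t \<in> {l<..<r}" "t \<notin> N" for t
  proof -
    have tT: "t \<in> {0..T} - N" using that l r by auto
    have "P1 t \<noteq> 0" "P2 t \<noteq> 0" using nz that by auto
    then show ?thesis using sg1[OF tT] sg2[OF tT] sgns[OF that(1)] by simp
  qed
  have dg: "(\<gamma> has_vector_derivative (d1 *\<^sub>R X1 (\<gamma> t) + d2 *\<^sub>R X2 (\<gamma> t))) (at t)"
    if "t \<in> {l<..<r}" "t \<notin> N" for t
  proof -
    have tT: "t \<in> {0..T} - N" using that l r by auto
    show ?thesis using der[OF tT] uu[OF that] by simp
  qed
  have step1: "fst (\<gamma> s) = fst (\<gamma> l) + d1 * (s - l) \<and> fst (snd (\<gamma> s)) = fst (snd (\<gamma> l)) + d2 * (s - l)"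
    if s: "s \<in> {l..r}" for s
  proof -
    define G where "G t = (fst (\<gamma> t), fst (snd (\<gamma> t))) - t *\<^sub>R (d1, d2)" for t
    have acs: "abs_cont_on l s \<gamma>" using ac_sub[OF acg] l s r by auto
    have acG: "abs_cont_on l s G"
    proof (rule ac_dominated[OF acs ac_const[of l s 0], where K = 2])
      fix a b assume "a \<in> {l..s}" "b \<in> {l..s}"
      have "G b - G a = (fst (\<gamma> b - \<gamma> a), fst (snd (\<gamma> b - \<gamma> a))) - (b - a) *\<^sub>R (d1, d2)"
        unfolding G_def by (simp add: algebra_simps)
      then have "norm (G b - G a) \<le> norm (fst (\<gamma> b - \<gamma> a), fst (snd (\<gamma> b - \<gamma> a))) + norm ((b - a) *\<^sub>R (d1, d2))"
        by (metis norm_triangle_ineq4)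
      also have "\<dots> \<le> 2 * norm (\<gamma> b - \<gamma> a) + \<bar>b - a\<bar> * norm (d1, d2)"
        using norm_proj12[of "\<gamma> b - \<gamma> a"] norm_scaleR[of "b - a" "(d1, d2)"] by linarith
      also have "norm (d1, d2) \<le> 2"
        using norm_Pair_le[of d1 d2] d1 d2 by auto
      then have "\<bar>b - a\<bar> * norm (d1, d2) \<le> \<bar>b - a\<bar> * 2" by (intro mult_left_mono) auto
      finally show "norm (G b - G a) \<le> 2 * (norm (\<gamma> b - \<gamma> a) + norm ((0::real) - 0) + \<bar>b - a\<bar>)"
        by simp
    qed simp
    have "norm (G s - G l) \<le> 0 * (s - l)"
    proof (rule ac_deriv_bound[OF acG _ _, where N = "N \<union> {l, s}"])
      show "l \<le> s" using s by simp
      show "negligible (N \<union> {l, s})" using N by auto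
      fix t assume t: "t \<in> {l..s} - (N \<union> {l, s})"
      then have t': "t \<in> {l<..<r}" "t \<notin> N" using s by auto
      have D2: "((\<lambda>t. t *\<^sub>R (d1, d2)) has_vector_derivative 1 *\<^sub>R (d1, d2)) (at t)"
        unfolding has_vector_derivative_def scaleR_one
        by (rule bounded_linear_imp_has_derivative) (rule bounded_linear_scaleR_left)
      have "(G has_vector_derivative ((fst (d1 *\<^sub>R X1 (\<gamma> t) + d2 *\<^sub>R X2 (\<gamma> t)),
              fst (snd (d1 *\<^sub>R X1 (\<gamma> t) + d2 *\<^sub>R X2 (\<gamma> t)))) - 1 *\<^sub>R (d1, d2))) (at t)"
        unfolding G_def
        by (rule has_vector_derivative_diff[OF hvd_linear[OF dg[OF t'] bl_proj12] D2])
      moreover have "(fst (d1 *\<^sub>R X1 (\<gamma> t) + d2 *\<^sub>R X2 (\<gamma> t)),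
              fst (snd (d1 *\<^sub>R X1 (\<gamma> t) + d2 *\<^sub>R X2 (\<gamma> t)))) - 1 *\<^sub>R (d1, d2) = 0"
        unfolding field_eq by simp
      ultimately have "(G has_vector_derivative 0) (at t)" by simp
      then show "\<exists>D. (G has_vector_derivative D) (at t) \<and> norm D \<le> 0" by (intro exI[of _ 0]) simp
    qed
    then have "G s = G l" by simp
    then show ?thesis unfolding G_def by (simp add: algebra_simps)
  qed
  have step2: "\<gamma> s = mv (\<gamma> l) d1 d2 (s - l)" if s: "s \<in> {l..r}" for s
  proof -
    define H where "H t = \<gamma> t - mv (\<gamma> l) d1 d2 (t - l)" for t
    define K where "K = \<bar>d1\<bar> + \<bar>d2\<bar> + \<bar>d2 * fst (\<gamma> l) - d1 * fst (snd (\<gamma> l))\<bar>"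
    have acs: "abs_cont_on l s \<gamma>" using ac_sub[OF acg] l s r by auto
    have acH: "abs_cont_on l s H"
    proof (rule ac_dominated[OF acs ac_const[of l s 0], where K = "K + 1"])
      fix a b assume "a \<in> {l..s}" "b \<in> {l..s}"
      have "H b - H a = (\<gamma> b - \<gamma> a) - (mv (\<gamma> l) d1 d2 (b - l) - mv (\<gamma> l) d1 d2 (a - l))"
        unfolding H_def by (simp add: algebra_simps)
      then have "norm (H b - H a) \<le> norm (\<gamma> b - \<gamma> a) + norm (mv (\<gamma> l) d1 d2 (b - l) - mv (\<gamma> l) d1 d2 (a - l))"
        by (metis norm_triangle_ineq4)
      also have "\<dots> \<le> norm (\<gamma> b - \<gamma> a) + K * \<bar>b - a\<bar>"
        using mv_lip[of "\<gamma> l" d1 d2 b l a] unfolding K_def by simp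
      also have "\<dots> \<le> (K + 1) * (norm (\<gamma> b - \<gamma> a) + norm ((0::real) - 0) + \<bar>b - a\<bar>)"
      proof -
        have "K \<ge> 0" unfolding K_def by simp
        then show ?thesis by (simp add: algebra_simps)
      qed
      finally show "norm (H b - H a) \<le> (K + 1) * (norm (\<gamma> b - \<gamma> a) + norm ((0::real) - 0) + \<bar>b - a\<bar>)" .
    qed (simp add: K_def)
    have "norm (H s - H l) \<le> 0 * (s - l)"
    proof (rule ac_deriv_bound[OF acH _ _, where N = "N \<union> {l, s}"])
      show "l \<le> s" using s by simp
      show "negligible (N \<union> {l, s})" using N by auto
      fix t assume t: "t \<in> {l..s} - (N \<union> {l, s})"
      then have t': "t \<in> {l<..<r}" "t \<notin> N" using s by auto
      have "(H has_vector_derivative ((d1 *\<^sub>R X1 (\<gamma> t) + d2 *\<^sub>R X2 (\<gamma> t)) -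
          (d1 *\<^sub>R X1 (mv (\<gamma> l) d1 d2 (t - l)) + d2 *\<^sub>R X2 (mv (\<gamma> l) d1 d2 (t - l))))) (at t)"
        unfolding H_def by (intro has_vector_derivative_diff dg[OF t'] mv_deriv)
      moreover have "(d1 *\<^sub>R X1 (\<gamma> t) + d2 *\<^sub>R X2 (\<gamma> t)) -
          (d1 *\<^sub>R X1 (mv (\<gamma> l) d1 d2 (t - l)) + d2 *\<^sub>R X2 (mv (\<gamma> l) d1 d2 (t - l))) = 0"
      proof -
        have "t \<in> {l..r}" using t' by auto
        from step1[OF this] show ?thesis unfolding field_eq by (simp add: mv_def)
      qed
      ultimately have "(H has_vector_derivative 0) (at t)" by simp
      then show "\<exists>D. (H has_vector_derivative D) (at t) \<and> norm D \<le> 0" by (intro exI[of _ 0]) simp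
    qed
    then have "H s = H l" by simp
    then show ?thesis unfolding H_def by simp
  qed
  show ?thesis using that[OF d1 d2 sgns step2] by blast
qed

end

lemma chain_alg:
  assumes R: "R * R = tau * tau + e1 * e2" and s: "s = 1 \<or> s = -1" and a: "a = 1 \<or> a = -1" and b: "b = 1 \<or> b = -1"
  shows "mv (mv (mv (mv (mv (mv q a b e1) (- s * b) (s * a) tau) (- a) (- b) tau) (s * b) (- s * a) tau) a b tau) (- s * b) (s * a) e2
       = mv (mv (mv (mv q (s * b) (- s * a) (R - e2)) a b R) (- s * b) (s * a) R) (- a) (- b) (R - e1)"
proof -
  obtain x y z where q: "q = (x, y, z)" by (cases q)
  have z: "LHS = RHS" if "LHS - RHS = (2 * s) * (R * R - tau * tau - e1 * e2) \<or> LHS - RHS = (-2 * s) * (R * R - tau * tau - e1 * e2)" for LHS RHS :: real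
    using that R by auto
  show ?thesis unfolding q mv_def
    apply (simp add: prod_eq_iff)
    apply (intro conjI)
      apply (simp add: algebra_simps)
     apply (simp add: algebra_simps)
    apply (rule z)
    using s a b by (elim disjE) (simp_all add: field_simps)
qed


lemma shortcut:
  assumes adm: "admissible T \<gamma> u1 u2" and t0: "0 \<le> t0"
    and e1: "0 < e1" "e1 \<le> tau" and e2: "0 < e2" "e2 \<le> tau"
    and TT: "T = t0 + e1 + 4 * tau + e2"
    and s: "s = 1 \<or> s = -1" and a: "a = 1 \<or> a = -1" and b: "b = 1 \<or> b = -1"
    and gT: "\<gamma> T = mv (mv (mv (mv (mv (mv (\<gamma> t0) a b e1) (- s * b) (s * a) tau) (- a) (- b) tau) (s * b) (- s * a) tau) a b tau) (- s * b) (s * a) e2"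
  shows "\<not> time_minimizer T \<gamma>"
proof -
  have tau: "tau > 0" using e1 by simp
  define R where "R = sqrt (tau * tau + e1 * e2)"
  have RR: "R * R = tau * tau + e1 * e2" unfolding R_def using e1 e2 tau by simp
  have Rgt: "R > tau"
  proof -
    have "sqrt (tau * tau) < sqrt (tau * tau + e1 * e2)" using e1 e2 by (intro real_sqrt_less_mono) simp
    then show ?thesis unfolding R_def using tau by simp
  qed
  have Rlt: "R < tau + (e1 + e2) / 2"
  proof -
    have "tau * tau + e1 * e2 < (tau + (e1 + e2) / 2) * (tau + (e1 + e2) / 2)"
    proof -
      have "0 \<le> (e1 - e2) * (e1 - e2)" by simp
      then have "4 * (e1 * e2) \<le> (e1 + e2) * (e1 + e2)" by (simp add: algebra_simps)
      moreover have "0 < tau * (e1 + e2)" using tau e1 e2 by simp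
      ultimately show ?thesis by (simp add: field_simps)
    qed
    then have "sqrt (tau * tau + e1 * e2) < sqrt ((tau + (e1 + e2) / 2) * (tau + (e1 + e2) / 2))"
      by (intro real_sqrt_less_mono)
    then show ?thesis unfolding R_def using tau e1 e2 by simp
  qed
  define r0 where "r0 = t0"
  define r1 where "r1 = r0 + (R - e2)"
  define r2 where "r2 = r1 + R"
  define r3 where "r3 = r2 + R"
  define T' where "T' = r3 + (R - e1)"
  have ord: "0 \<le> r0" "r0 < r1" "r1 < r2" "r2 < r3" "r3 < T'"
    unfolding r0_def r1_def r2_def r3_def T'_def using t0 Rgt e1 e2 by auto
  have T'T: "T' < T" unfolding T'_def r3_def r2_def r1_def r0_def TT using Rlt by (simp add: field_simps)
  define q0 where "q0 = \<gamma> t0"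
  define q1 where "q1 = mv q0 (s * b) (- s * a) (R - e2)"
  define q2 where "q2 = mv q1 a b R"
  define q3 where "q3 = mv q2 (- s * b) (s * a) R"
  define \<psi> where "\<psi> t = (if t \<le> r0 then \<gamma> t else if t \<le> r1 then mv q0 (s * b) (- s * a) (t - r0)
      else if t \<le> r2 then mv q1 a b (t - r1) else if t \<le> r3 then mv q2 (- s * b) (s * a) (t - r2)
      else mv q3 (- a) (- b) (t - r3))" for t
  define v1 where "v1 t = (if t \<in> {..r0} then u1 t else if t \<in> {..r1} then s * b
      else if t \<in> {..r2} then a else if t \<in> {..r3} then - s * b else - a)" for t
  define v2 where "v2 t = (if t \<in> {..r0} then u2 t else if t \<in> {..r1} then - s * a
      else if t \<in> {..r2} then b else if t \<in> {..r3} then s * a else - b)" for t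
  from adm have T0: "0 \<le> T" and acg: "abs_cont_on 0 T \<gamma>"
    and mu1: "u1 \<in> borel_measurable (restrict_space lebesgue {0..T})"
    and mu2: "u2 \<in> borel_measurable (restrict_space lebesgue {0..T})"
    and AEg: "AE t in lebesgue. t \<in> {0..T} \<longrightarrow> \<bar>u1 t\<bar> \<le> 1 \<and> \<bar>u2 t\<bar> \<le> 1 \<and>
        (\<gamma> has_vector_derivative (u1 t *\<^sub>R X1 (\<gamma> t) + u2 t *\<^sub>R X2 (\<gamma> t))) (at t)"
    unfolding admissible_def by auto
  have r0T: "r0 \<le> T" using ord T'T by simp
  have ac0: "abs_cont_on 0 r0 \<psi>"
    by (rule ac_cong[OF ac_sub[OF acg order_refl r0T]]) (simp add: \<psi>_def)
  have ac1: "abs_cont_on r0 r1 \<psi>"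
    by (rule ac_cong[OF ac_mv[of r0 r1 q0 "s * b" "- s * a" r0]]) (auto simp: \<psi>_def q0_def r0_def)
  have ac2: "abs_cont_on r1 r2 \<psi>"
    by (rule ac_cong[OF ac_mv[of r1 r2 q1 a b r1]]) (use ord in \<open>auto simp: \<psi>_def q1_def r1_def\<close>)
  have ac3: "abs_cont_on r2 r3 \<psi>"
    by (rule ac_cong[OF ac_mv[of r2 r3 q2 "- s * b" "s * a" r2]]) (use ord in \<open>auto simp: \<psi>_def q2_def r2_def\<close>)
  have ac4: "abs_cont_on r3 T' \<psi>"
    by (rule ac_cong[OF ac_mv[of r3 T' q3 "- a" "- b" r3]]) (use ord in \<open>auto simp: \<psi>_def q3_def r3_def\<close>)
  have acpsi: "abs_cont_on 0 T' \<psi>"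
  proof -
    have "abs_cont_on 0 r1 \<psi>" using ac_glue[OF ac0 ac1] ord by simp
    then have "abs_cont_on 0 r2 \<psi>" using ac_glue[OF _ ac2] ord by simp
    then have "abs_cont_on 0 r3 \<psi>" using ac_glue[OF _ ac3] ord by simp
    then show ?thesis using ac_glue[OF _ ac4] ord by simp
  qed
  have setsI: "\<And>r. {..r} \<inter> space (restrict_space lebesgue {0..T'}) \<in> sets (restrict_space lebesgue {0..T'})"
  proof -
    fix r :: real
    have "{0..T'} \<inter> space lebesgue \<in> sets lebesgue" by simp
    then show "{..r} \<inter> space (restrict_space lebesgue {0..T'}) \<in> sets (restrict_space lebesgue {0..T'})"
      by (subst sets_restrict_space_iff) auto
  qed
  have mu1': "u1 \<in> borel_measurable (restrict_space lebesgue {0..T'})"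
    using measurable_restrict_mono[OF mu1] T'T by auto
  have mu2': "u2 \<in> borel_measurable (restrict_space lebesgue {0..T'})"
    using measurable_restrict_mono[OF mu2] T'T by auto
  have mv1: "v1 \<in> borel_measurable (restrict_space lebesgue {0..T'})"
    unfolding v1_def by (intro measurable_If_set mu1' measurable_const setsI) auto
  have mv2: "v2 \<in> borel_measurable (restrict_space lebesgue {0..T'})"
    unfolding v2_def by (intro measurable_If_set mu2' measurable_const setsI) auto
  obtain N where N: "{t \<in> space lebesgue. \<not> (t \<in> {0..T} \<longrightarrow> \<bar>u1 t\<bar> \<le> 1 \<and> \<bar>u2 t\<bar> \<le> 1 \<and>
        (\<gamma> has_vector_derivative (u1 t *\<^sub>R X1 (\<gamma> t) + u2 t *\<^sub>R X2 (\<gamma> t))) (at t))} \<subseteq> N"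
      "emeasure lebesgue N = 0" "N \<in> sets lebesgue"
    using AE_E[OF AEg] by blast
  have Nn: "N \<in> null_sets lebesgue" using N by auto
  define N' where "N' = N \<union> {r0, r1, r2, r3}"
  have N'n: "N' \<in> null_sets lebesgue"
  proof -
    have "negligible {r0, r1, r2, r3}" by simp
    then have "{r0, r1, r2, r3} \<in> null_sets lebesgue" using negligible_iff_null_sets by blast
    then show ?thesis unfolding N'_def using Nn by auto
  qed
  have gN: "\<bar>u1 t\<bar> \<le> 1 \<and> \<bar>u2 t\<bar> \<le> 1 \<and>
        (\<gamma> has_vector_derivative (u1 t *\<^sub>R X1 (\<gamma> t) + u2 t *\<^sub>R X2 (\<gamma> t))) (at t)"
    if "t \<in> {0..T}" "t \<notin> N" for t
    using N(1) that by auto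
  have AEpsi: "AE t in lebesgue. t \<in> {0..T'} \<longrightarrow> \<bar>v1 t\<bar> \<le> 1 \<and> \<bar>v2 t\<bar> \<le> 1 \<and>
        (\<psi> has_vector_derivative (v1 t *\<^sub>R X1 (\<psi> t) + v2 t *\<^sub>R X2 (\<psi> t))) (at t)"
  proof (rule AE_I'[OF N'n])
    have key: "\<bar>v1 t\<bar> \<le> 1 \<and> \<bar>v2 t\<bar> \<le> 1 \<and>
        (\<psi> has_vector_derivative (v1 t *\<^sub>R X1 (\<psi> t) + v2 t *\<^sub>R X2 (\<psi> t))) (at t)"
      if tN': "t \<notin> N'" and tT': "t \<in> {0..T'}" for t
    proof -
    from tN' have tN: "t \<notin> N" and tr: "t \<noteq> r0" "t \<noteq> r1" "t \<noteq> r2" "t \<noteq> r3" unfolding N'_def by auto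
    have sab: "\<bar>s * b\<bar> \<le> 1" "\<bar>s * a\<bar> \<le> 1" "\<bar>a\<bar> \<le> 1" "\<bar>b\<bar> \<le> 1"
      using s a b by (auto simp: abs_mult)
    show "\<bar>v1 t\<bar> \<le> 1 \<and> \<bar>v2 t\<bar> \<le> 1 \<and>
        (\<psi> has_vector_derivative (v1 t *\<^sub>R X1 (\<psi> t) + v2 t *\<^sub>R X2 (\<psi> t))) (at t)"
    proof (cases "t < r0")
      case True
      have tT: "t \<in> {0..T}" using tT' T'T True ord by auto
      note G = gN[OF tT tN]
      have "(\<psi> has_vector_derivative (u1 t *\<^sub>R X1 (\<gamma> t) + u2 t *\<^sub>R X2 (\<gamma> t))) (at t)"
        by (rule has_vector_derivative_transform_within_open[OF conjunct2[OF conjunct2[OF G]], of "{..<r0}"])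
           (use True in \<open>auto simp: \<psi>_def\<close>)
      then show ?thesis using G True by (simp add: v1_def v2_def \<psi>_def)
    next
      case F0: False
      show ?thesis
      proof (cases "t < r1")
        case True
        have "((\<lambda>t. mv q0 (s * b) (- s * a) (t - r0)) has_vector_derivative
           ((s * b) *\<^sub>R X1 (mv q0 (s * b) (- s * a) (t - r0)) + (- s * a) *\<^sub>R X2 (mv q0 (s * b) (- s * a) (t - r0)))) (at t)"
          by (rule mv_deriv)
        then have "(\<psi> has_vector_derivative
           ((s * b) *\<^sub>R X1 (mv q0 (s * b) (- s * a) (t - r0)) + (- s * a) *\<^sub>R X2 (mv q0 (s * b) (- s * a) (t - r0)))) (at t)"
          by (rule has_vector_derivative_transform_within_open[of _ _ _ "{r0<..<r1}"])
             (use F0 True tr in \<open>auto simp: \<psi>_def\<close>)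
        then show ?thesis using F0 True tr sab by (simp add: v1_def v2_def \<psi>_def)
      next
        case F1: False
        show ?thesis
        proof (cases "t < r2")
          case True
          have "((\<lambda>t. mv q1 a b (t - r1)) has_vector_derivative
             (a *\<^sub>R X1 (mv q1 a b (t - r1)) + b *\<^sub>R X2 (mv q1 a b (t - r1)))) (at t)"
            by (rule mv_deriv)
          then have "(\<psi> has_vector_derivative
             (a *\<^sub>R X1 (mv q1 a b (t - r1)) + b *\<^sub>R X2 (mv q1 a b (t - r1)))) (at t)"
            by (rule has_vector_derivative_transform_within_open[of _ _ _ "{r1<..<r2}"])
               (use F0 F1 True tr ord in \<open>auto simp: \<psi>_def\<close>)
          then show ?thesis using F0 F1 True tr sab ord by (simp add: v1_def v2_def \<psi>_def)
        next
          case F2: False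
          show ?thesis
          proof (cases "t < r3")
            case True
            have "((\<lambda>t. mv q2 (- s * b) (s * a) (t - r2)) has_vector_derivative
               ((- s * b) *\<^sub>R X1 (mv q2 (- s * b) (s * a) (t - r2)) + (s * a) *\<^sub>R X2 (mv q2 (- s * b) (s * a) (t - r2)))) (at t)"
              by (rule mv_deriv)
            then have "(\<psi> has_vector_derivative
               ((- s * b) *\<^sub>R X1 (mv q2 (- s * b) (s * a) (t - r2)) + (s * a) *\<^sub>R X2 (mv q2 (- s * b) (s * a) (t - r2)))) (at t)"
              by (rule has_vector_derivative_transform_within_open[of _ _ _ "{r2<..<r3}"])
                 (use F0 F1 F2 True tr ord in \<open>auto simp: \<psi>_def\<close>)
            then show ?thesis using F0 F1 F2 True tr sab ord by (simp add: v1_def v2_def \<psi>_def)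
          next
            case F3: False
            have "((\<lambda>t. mv q3 (- a) (- b) (t - r3)) has_vector_derivative
               ((- a) *\<^sub>R X1 (mv q3 (- a) (- b) (t - r3)) + (- b) *\<^sub>R X2 (mv q3 (- a) (- b) (t - r3)))) (at t)"
              by (rule mv_deriv)
            then have "(\<psi> has_vector_derivative
               ((- a) *\<^sub>R X1 (mv q3 (- a) (- b) (t - r3)) + (- b) *\<^sub>R X2 (mv q3 (- a) (- b) (t - r3)))) (at t)"
              by (rule has_vector_derivative_transform_within_open[of _ _ _ "{r3<..}"])
                 (use F0 F1 F2 F3 tr ord in \<open>auto simp: \<psi>_def\<close>)
            then show ?thesis using F0 F1 F2 F3 tr sab ord by (simp add: v1_def v2_def \<psi>_def)
          qed
        qed
      qed
    qed
    qed
    then show "{t \<in> space lebesgue. \<not> (t \<in> {0..T'} \<longrightarrow> \<bar>v1 t\<bar> \<le> 1 \<and> \<bar>v2 t\<bar> \<le> 1 \<and>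
        (\<psi> has_vector_derivative (v1 t *\<^sub>R X1 (\<psi> t) + v2 t *\<^sub>R X2 (\<psi> t))) (at t))} \<subseteq> N'"
      by blast
  qed
  have adm': "admissible T' \<psi> v1 v2"
    unfolding admissible_def using ord acpsi mv1 mv2 AEpsi by auto
  have start: "\<psi> 0 = \<gamma> 0" using ord by (simp add: \<psi>_def)
  have "\<psi> T' = mv q3 (- a) (- b) (R - e1)"
    using ord by (simp add: \<psi>_def T'_def)
  also have "\<dots> = \<gamma> T"
    unfolding gT q3_def q2_def q1_def q0_def using chain_alg[OF RR s a b] by simp
  finally have fin: "\<psi> T' = \<gamma> T" .
  show ?thesis unfolding time_minimizer_def using T'T adm' start fin by blast
qed


lemma sw_idx:
  fixes L :: "real list"
  assumes "sorted_wrt (<) L" "i < length L" "j < length L" "L ! i < L ! j"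
  shows "i < j"
proof (rule ccontr)
  assume "\<not> i < j"
  then have "j < i \<or> j = i" by auto
  then show False
  proof
    assume "j < i"
    then have "L ! j < L ! i" using sorted_wrt_nth_less[OF assms(1) _ assms(2)] by blast
    with assms(4) show False by simp
  next
    assume "j = i" with assms(4) show False by simp
  qed
qed

lemma sgn_pm: "d = 1 \<or> d = -1 \<Longrightarrow> sgn (k * d) = sgn k * (d::real)"
  by (auto simp: sgn_mult)

lemma sgn_pos_mult: "h > 0 \<Longrightarrow> sgn (k * h) = sgn (k::real)"
  by (simp add: sgn_mult)

context ctx
begin

definition seg :: "real \<Rightarrow> real \<Rightarrow> real \<Rightarrow> real \<Rightarrow> bool" where
  "seg l r d1 d2 \<longleftrightarrow> (d1 = 1 \<or> d1 = -1) \<and> (d2 = 1 \<or> d2 = -1) \<and>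
     (\<forall>t\<in>{l<..<r}. sgn (P1 t) = d1 \<and> sgn (P2 t) = d2) \<and>
     (\<forall>t\<in>{l..r}. \<gamma> t = mv (\<gamma> l) d1 d2 (t - l))"

lemma seg_ex:
  assumes "0 \<le> l" "l < r" "r \<le> T" "\<forall>t\<in>{l<..<r}. P1 t \<noteq> 0 \<and> P2 t \<noteq> 0"
  shows "\<exists>d1 d2. seg l r d1 d2"
proof -
  obtain d1 d2 where "d1 = 1 \<or> d1 = -1" "d2 = 1 \<or> d2 = -1"
    "\<And>t. t \<in> {l<..<r} \<Longrightarrow> sgn (P1 t) = d1 \<and> sgn (P2 t) = d2"
    "\<And>t. t \<in> {l..r} \<Longrightarrow> \<gamma> t = mv (\<gamma> l) d1 d2 (t - l)"
    using gap[OF assms] by blast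
  then show ?thesis unfolding seg_def by blast
qed

lemma seg_P:
  assumes "seg l r d1 d2" "0 \<le> l" "r \<le> T" "t \<in> {l..r}"
  shows "P1 t = P1 l - c * d2 * (t - l) \<and> P2 t = P2 l + c * d1 * (t - l)"
proof -
  have g: "\<gamma> t = mv (\<gamma> l) d1 d2 (t - l)" using assms unfolding seg_def by blast
  have tT: "t \<in> {0..T}" "l \<in> {0..T}" using assms by auto
  show ?thesis unfolding P1[OF tT(1)] P2[OF tT(1)] P1[OF tT(2)] P2[OF tT(2)] g
    by (simp add: mv_def algebra_simps)
qed

lemma seg_sgn:
  assumes "seg l r d1 d2" "t \<in> {l<..<r}"
  shows "sgn (P1 t) = d1" "sgn (P2 t) = d2" "P1 t \<noteq> 0" "P2 t \<noteq> 0"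
proof -
  have a: "sgn (P1 t) = d1" "sgn (P2 t) = d2" "d1 = 1 \<or> d1 = -1" "d2 = 1 \<or> d2 = -1"
    using assms unfolding seg_def by blast+
  then show "sgn (P1 t) = d1" "sgn (P2 t) = d2" by simp_all
  show "P1 t \<noteq> 0" using a(1,3) by auto
  show "P2 t \<noteq> 0" using a(2,4) by auto
qed

lemma seg_pm: "seg l r d1 d2 \<Longrightarrow> (d1 = 1 \<or> d1 = -1) \<and> (d2 = 1 \<or> d2 = -1)"
  unfolding seg_def by blast

lemma seg_trans:
  assumes s1: "seg l m d1 d2" and s2: "seg m r e1 e2" and l: "0 \<le> l" "l < m" and r: "m < r" "r \<le> T"
    and z: "P1 m = 0 \<or> P2 m = 0"
  shows "c \<noteq> 0 \<and> e1 = - sgn c * d2 \<and> e2 = sgn c * d1"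
proof -
  define ml where "ml = (l + m) / 2"
  define mr where "mr = (m + r) / 2"
  have ml: "ml \<in> {l<..<m}" "ml \<in> {l..m}" using l unfolding ml_def by auto
  have mr: "mr \<in> {m<..<r}" "mr \<in> {m..r}" using r unfolding mr_def by auto
  have mT: "m \<le> T" "0 \<le> m" using l r by auto
  have pm: "d1 = 1 \<or> d1 = -1" "d2 = 1 \<or> d2 = -1" "e1 = 1 \<or> e1 = -1" "e2 = 1 \<or> e2 = -1"
    using seg_pm[OF s1] seg_pm[OF s2] by auto
  have Pm_l: "P1 m = P1 l - c * d2 * (m - l)" "P2 m = P2 l + c * d1 * (m - l)"
    using seg_P[OF s1 l(1) mT(1), of m] l by auto
  have Pml: "P1 ml = P1 l - c * d2 * (ml - l)" "P2 ml = P2 l + c * d1 * (ml - l)"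
    using seg_P[OF s1 l(1) mT(1) ml(2)] by auto
  have Pmr: "P1 mr = P1 m - c * e2 * (mr - m)" "P2 mr = P2 m + c * e1 * (mr - m)"
    using seg_P[OF s2 mT(2) r(2) mr(2)] by auto
  have hl: "m - ml > 0" "mr - m > 0" using ml mr by auto
  have nrm_m: "\<bar>P1 m\<bar> + \<bar>P2 m\<bar> = l0" using nrm mT by auto
  from z show ?thesis
  proof
    assume z1: "P1 m = 0"
    then have P2m: "P2 m \<noteq> 0" using nrm_m l0 by auto
    have nz2: "\<forall>t\<in>{l<..<r}. P2 t \<noteq> 0"
    proof
      fix t assume t: "t \<in> {l<..<r}"
      consider "t \<in> {l<..<m}" | "t = m" | "t \<in> {m<..<r}" using t by force
      then show "P2 t \<noteq> 0"
        by cases (use seg_sgn(4)[OF s1] seg_sgn(4)[OF s2] P2m in auto)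
    qed
    have "sgn (P2 ml) = sgn (P2 mr)"
      by (rule const_sign[OF cont_P2[OF l(1) r(2)] nz2]) (use ml mr l r in auto)
    then have e2d2: "e2 = d2" using seg_sgn(2)[OF s1 ml(1)] seg_sgn(2)[OF s2 mr(1)] by simp
    have "P1 ml = (c * d2) * (m - ml)" using Pml Pm_l z1 by (simp add: algebra_simps)
    then have "sgn (P1 ml) = sgn c * d2" using sgn_pos_mult[OF hl(1), of "c * d2"] sgn_pm[OF pm(2), of c] by simp
    then have d1eq: "d1 = sgn c * d2" using seg_sgn(1)[OF s1 ml(1)] by simp
    have "P1 mr = (- c * e2) * (mr - m)" using Pmr z1 by (simp add: algebra_simps)
    then have "sgn (P1 mr) = - sgn c * e2" using sgn_pos_mult[OF hl(2), of "- c * e2"] sgn_pm[OF pm(4), of "- c"] by simp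
    then have e1eq: "e1 = - sgn c * e2" using seg_sgn(1)[OF s2 mr(1)] by simp
    have c0: "c \<noteq> 0" using d1eq pm(1) by auto
    then have ss: "sgn c * sgn c = 1" by (simp add: sgn_if)
    have "e2 = sgn c * d1" using d1eq e2d2 ss by (simp add: mult.assoc[symmetric])
    then show ?thesis using c0 e1eq e2d2 by simp
  next
    assume z2: "P2 m = 0"
    then have P1m: "P1 m \<noteq> 0" using nrm_m l0 by auto
    have nz1: "\<forall>t\<in>{l<..<r}. P1 t \<noteq> 0"
    proof
      fix t assume t: "t \<in> {l<..<r}"
      consider "t \<in> {l<..<m}" | "t = m" | "t \<in> {m<..<r}" using t by force
      then show "P1 t \<noteq> 0"
        by cases (use seg_sgn(3)[OF s1] seg_sgn(3)[OF s2] P1m in auto)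
    qed
    have "sgn (P1 ml) = sgn (P1 mr)"
      by (rule const_sign[OF cont_P1[OF l(1) r(2)] nz1]) (use ml mr l r in auto)
    then have e1d1: "e1 = d1" using seg_sgn(1)[OF s1 ml(1)] seg_sgn(1)[OF s2 mr(1)] by simp
    have "P2 ml = (- c * d1) * (m - ml)" using Pml Pm_l z2 by (simp add: algebra_simps)
    then have "sgn (P2 ml) = - sgn c * d1" using sgn_pos_mult[OF hl(1), of "- c * d1"] sgn_pm[OF pm(1), of "- c"] by simp
    then have d2eq: "d2 = - sgn c * d1" using seg_sgn(2)[OF s1 ml(1)] by simp
    have "P2 mr = (c * e1) * (mr - m)" using Pmr z2 by (simp add: algebra_simps)
    then have "sgn (P2 mr) = sgn c * e1" using sgn_pos_mult[OF hl(2), of "c * e1"] sgn_pm[OF pm(3), of c] by simp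
    then have e2eq: "e2 = sgn c * e1" using seg_sgn(2)[OF s2 mr(1)] by simp
    have c0: "c \<noteq> 0" using d2eq pm(2) by auto
    then have ss: "sgn c * sgn c = 1" by (simp add: sgn_if)
    have "e1 = - sgn c * d2" using d2eq e1d1 ss by (simp add: mult.assoc[symmetric])
    then show ?thesis using c0 e2eq e1d1 by simp
  qed
qed

lemma seg_len:
  assumes s1: "seg l m d1 d2" and l: "0 \<le> l" "l < m" "m \<le> T"
    and zl: "P1 l = 0 \<or> P2 l = 0" and zm: "P1 m = 0 \<or> P2 m = 0"
  shows "\<bar>c\<bar> * (m - l) = l0"
proof -
  define ml where "ml = (l + m) / 2"
  have ml: "ml \<in> {l<..<m}" "ml \<in> {l..m}" using l unfolding ml_def by auto
  have Pm: "P1 m = P1 l - c * d2 * (m - l)" "P2 m = P2 l + c * d1 * (m - l)"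
    using seg_P[OF s1 l(1) l(3), of m] l by auto
  have Pml: "P1 ml = P1 l - c * d2 * (ml - l)" "P2 ml = P2 l + c * d1 * (ml - l)"
    using seg_P[OF s1 l(1) l(3) ml(2)] by auto
  have pm: "d1 = 1 \<or> d1 = -1" "d2 = 1 \<or> d2 = -1" using seg_pm[OF s1] by auto
  have nl: "\<bar>P1 l\<bar> + \<bar>P2 l\<bar> = l0" using nrm l by auto
  have ad: "\<bar>d1\<bar> = 1" "\<bar>d2\<bar> = 1" using pm by auto
  have ml0: "m - l > 0" using l by simp
  from zl show ?thesis
  proof
    assume zl1: "P1 l = 0"
    from zm show ?thesis
    proof
      assume "P1 m = 0"
      then have "c * d2 * (m - l) = 0" using Pm zl1 by simp
      then have "c = 0" using pm ml0 by auto
      then have "P1 ml = 0" using Pml zl1 by simp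
      then show ?thesis using seg_sgn(3)[OF s1 ml(1)] by simp
    next
      assume "P2 m = 0"
      then have "P2 l = - c * d1 * (m - l)" using Pm by simp
      then have "\<bar>P2 l\<bar> = \<bar>c\<bar> * (m - l)" using ad ml0 by (simp add: abs_mult)
      then show ?thesis using nl zl1 by simp
    qed
  next
    assume zl2: "P2 l = 0"
    from zm show ?thesis
    proof
      assume "P1 m = 0"
      then have "P1 l = c * d2 * (m - l)" using Pm by simp
      then have "\<bar>P1 l\<bar> = \<bar>c\<bar> * (m - l)" using ad ml0 by (simp add: abs_mult)
      then show ?thesis using nl zl2 by simp
    next
      assume "P2 m = 0"
      then have "c * d1 * (m - l) = 0" using Pm zl2 by simp
      then have "c = 0" using pm ml0 by auto
      then have "P2 ml = 0" using Pml zl2 by simp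
      then show ?thesis using seg_sgn(4)[OF s1 ml(1)] by simp
    qed
  qed
qed

lemma seg_len_le:
  assumes s1: "seg l m d1 d2" and l: "0 \<le> l" "l < m" "m \<le> T"
    and z: "P1 l = 0 \<or> P2 l = 0 \<or> P1 m = 0 \<or> P2 m = 0"
  shows "\<bar>c\<bar> * (m - l) \<le> l0"
proof -
  have Pm: "P1 m = P1 l - c * d2 * (m - l)" "P2 m = P2 l + c * d1 * (m - l)"
    using seg_P[OF s1 l(1) l(3), of m] l by auto
  have pm: "d1 = 1 \<or> d1 = -1" "d2 = 1 \<or> d2 = -1" using seg_pm[OF s1] by auto
  have nl: "\<bar>P1 l\<bar> + \<bar>P2 l\<bar> = l0" "\<bar>P1 m\<bar> + \<bar>P2 m\<bar> = l0" using nrm l by auto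
  have ad: "\<bar>d1\<bar> = 1" "\<bar>d2\<bar> = 1" using pm by auto
  have ml0: "m - l > 0" using l by simp
  have e1: "\<bar>c * d2 * (m - l)\<bar> = \<bar>c\<bar> * (m - l)" "\<bar>c * d1 * (m - l)\<bar> = \<bar>c\<bar> * (m - l)"
    using ad ml0 by (simp_all add: abs_mult)
  from z consider "P1 l = 0" | "P2 l = 0" | "P1 m = 0" | "P2 m = 0" by blast
  then show ?thesis
  proof cases
    case 1
    then have "\<bar>P1 m\<bar> = \<bar>c\<bar> * (m - l)" using Pm e1 by simp
    then show ?thesis using nl(2) by simp
  next
    case 2
    then have "\<bar>P2 m\<bar> = \<bar>c\<bar> * (m - l)" using Pm e1 by simp
    then show ?thesis using nl(2) by simp
  next
    case 3
    then have "P1 l = c * d2 * (m - l)" using Pm by simp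
    then have "\<bar>P1 l\<bar> = \<bar>c\<bar> * (m - l)" using e1 by simp
    then show ?thesis using nl(1) by simp
  next
    case 4
    then have "P2 l = - (c * d1 * (m - l))" using Pm by simp
    then have "\<bar>P2 l\<bar> = \<bar>c\<bar> * (m - l)" using e1 by simp
    then show ?thesis using nl(1) by simp
  qed
qed

lemma seg_end:
  assumes "seg l r d1 d2" "l \<le> r"
  shows "\<gamma> r = mv (\<gamma> l) d1 d2 (r - l)"
proof -
  have "\<forall>t\<in>{l..r}. \<gamma> t = mv (\<gamma> l) d1 d2 (t - l)" using assms(1) unfolding seg_def by blast
  moreover have "r \<in> {l..r}" using assms(2) by simp
  ultimately show ?thesis by blast
qed

end

context ctx
begin

lemma ctx_main:
  assumes adm: "admissible T \<gamma> u1 u2"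
    and Zdef: "Z = {t \<in> {0<..<T}. P1 t = 0 \<or> P2 t = 0}"
    and fin: "finite Z" and card: "5 \<le> card Z"
  shows "\<not> time_minimizer T \<gamma>"
proof -
  define L where "L = sorted_list_of_set Z"
  define n where "n = length L"
  have n: "n = card Z" unfolding n_def L_def by simp
  have n5: "5 \<le> n" using card n by simp
  have sw: "sorted_wrt (<) L" unfolding L_def by (rule strict_sorted_list_of_set)
  have setL: "set L = Z" unfolding L_def using fin by simp
  have inZ: "\<And>i. i < n \<Longrightarrow> L ! i \<in> Z" using setL n_def nth_mem by blast
  have inZ': "\<And>i. i < n \<Longrightarrow> 0 < L ! i \<and> L ! i < T \<and> (P1 (L ! i) = 0 \<or> P2 (L ! i) = 0)"
    using inZ unfolding Zdef by auto
  have mono: "\<And>i j. i < j \<Longrightarrow> j < n \<Longrightarrow> L ! i < L ! j"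
    using sorted_wrt_nth_less[OF sw] n_def by blast
  have between: "\<And>i t. i + 1 < n \<Longrightarrow> L ! i < t \<Longrightarrow> t < L ! (i + 1) \<Longrightarrow> t \<notin> Z"
  proof
    fix i t assume i: "i + 1 < n" and t: "L ! i < t" "t < L ! (i + 1)" and tZ: "t \<in> Z"
    then obtain j where j: "j < n" "L ! j = t" using setL n_def by (metis in_set_conv_nth)
    have "i < j" by (rule sw_idx[OF sw]) (use i j t n_def in auto)
    moreover have "j < i + 1" by (rule sw_idx[OF sw]) (use i j t n_def in auto)
    ultimately show False by simp
  qed
  have above: "\<And>t. L ! (n - 1) < t \<Longrightarrow> t \<notin> Z"
  proof
    fix t assume t: "L ! (n - 1) < t" and tZ: "t \<in> Z"
    then obtain j where j: "j < n" "L ! j = t" using setL n_def by (metis in_set_conv_nth)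
    have "n - 1 < j" by (rule sw_idx[OF sw]) (use n5 j t n_def in auto)
    with j show False by simp
  qed
  have below: "\<And>t. t < L ! 0 \<Longrightarrow> t \<notin> Z"
  proof
    fix t assume t: "t < L ! 0" and tZ: "t \<in> Z"
    then obtain j where j: "j < n" "L ! j = t" using setL n_def by (metis in_set_conv_nth)
    have "j < 0" by (rule sw_idx[OF sw]) (use n5 j t n_def in auto)
    then show False by simp
  qed
  have nzZ: "\<And>t. t \<in> {0<..<T} \<Longrightarrow> t \<notin> Z \<Longrightarrow> P1 t \<noteq> 0 \<and> P2 t \<noteq> 0"
    unfolding Zdef by auto
  define z1 where "z1 = L ! (n - 5)"
  define z2 where "z2 = L ! (n - 4)"
  define z3 where "z3 = L ! (n - 3)"
  define z4 where "z4 = L ! (n - 2)"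
  define z5 where "z5 = L ! (n - 1)"
  define t0 where "t0 = (if 6 \<le> n then L ! (n - 6) else 0)"
  have zz: "0 < z1" "z1 < z2" "z2 < z3" "z3 < z4" "z4 < z5" "z5 < T"
    unfolding z1_def z2_def z3_def z4_def z5_def using mono inZ' n5 by auto
  have zeros: "P1 z1 = 0 \<or> P2 z1 = 0" "P1 z2 = 0 \<or> P2 z2 = 0" "P1 z3 = 0 \<or> P2 z3 = 0"
     "P1 z4 = 0 \<or> P2 z4 = 0" "P1 z5 = 0 \<or> P2 z5 = 0"
    unfolding z1_def z2_def z3_def z4_def z5_def using inZ' n5 by auto
  have t0: "0 \<le> t0" "t0 < z1"
  proof -
    have "0 \<le> t0 \<and> t0 < z1"
    proof (cases "6 \<le> n")
      case True
      have "0 < L ! (n - 6)" using inZ'[of "n - 6"] True by simp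
      moreover have "L ! (n - 6) < L ! (n - 5)" using mono[of "n - 6" "n - 5"] True by simp
      ultimately show ?thesis unfolding t0_def z1_def using True by simp
    next
      case False
      then show ?thesis unfolding t0_def using zz(1) by simp
    qed
    then show "0 \<le> t0" "t0 < z1" by auto
  qed
  have T0: "0 < T" using zz by simp
  have g0: "\<forall>t\<in>{t0<..<z1}. P1 t \<noteq> 0 \<and> P2 t \<noteq> 0"
  proof
    fix t assume t: "t \<in> {t0<..<z1}"
    have tin: "t \<in> {0<..<T}" using t t0 zz by auto
    have "t \<notin> Z"
    proof (cases "6 \<le> n")
      case True
      then show ?thesis using between[of "n - 6" t] t unfolding t0_def z1_def
        by (simp add: Suc_diff_Suc numeral_eq_Suc)
    next
      case False
      then have "n = 5" using n5 by simp
      then show ?thesis using below[of t] t unfolding z1_def by simp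
    qed
    then show "P1 t \<noteq> 0 \<and> P2 t \<noteq> 0" using nzZ tin by blast
  qed
  have gk: "\<forall>t\<in>{L ! i<..<L ! (i + 1)}. P1 t \<noteq> 0 \<and> P2 t \<noteq> 0" if i: "i + 1 < n" for i
  proof
    fix t assume t: "t \<in> {L ! i<..<L ! (i + 1)}"
    have "0 < L ! i" "L ! (i + 1) < T" using inZ' i by auto
    then have tin: "t \<in> {0<..<T}" using t by auto
    have "t \<notin> Z" using between[OF i] t by auto
    then show "P1 t \<noteq> 0 \<and> P2 t \<noteq> 0" using nzZ tin by blast
  qed
  have g1: "\<forall>t\<in>{z1<..<z2}. P1 t \<noteq> 0 \<and> P2 t \<noteq> 0"
    using gk[of "n - 5"] n5 unfolding z1_def z2_def by (simp add: numeral_eq_Suc Suc_diff_Suc)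
  have g2: "\<forall>t\<in>{z2<..<z3}. P1 t \<noteq> 0 \<and> P2 t \<noteq> 0"
    using gk[of "n - 4"] n5 unfolding z2_def z3_def by (simp add: numeral_eq_Suc Suc_diff_Suc)
  have g3: "\<forall>t\<in>{z3<..<z4}. P1 t \<noteq> 0 \<and> P2 t \<noteq> 0"
    using gk[of "n - 3"] n5 unfolding z3_def z4_def by (simp add: numeral_eq_Suc Suc_diff_Suc)
  have g4: "\<forall>t\<in>{z4<..<z5}. P1 t \<noteq> 0 \<and> P2 t \<noteq> 0"
    using gk[of "n - 2"] n5 unfolding z4_def z5_def by (simp add: numeral_eq_Suc Suc_diff_Suc)
  have g5: "\<forall>t\<in>{z5<..<T}. P1 t \<noteq> 0 \<and> P2 t \<noteq> 0"
  proof
    fix t assume t: "t \<in> {z5<..<T}"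
    have tin: "t \<in> {0<..<T}" using t zz by auto
    have "t \<notin> Z" using above[of t] t unfolding z5_def by simp
    then show "P1 t \<noteq> 0 \<and> P2 t \<noteq> 0" using nzZ tin by blast
  qed
  obtain a b where s0: "seg t0 z1 a b" using seg_ex[OF t0(1) t0(2) _ g0] zz by auto
  obtain p1 q1 where s1: "seg z1 z2 p1 q1" using seg_ex[OF _ _ _ g1] zz by auto
  obtain p2 q2 where s2: "seg z2 z3 p2 q2" using seg_ex[OF _ _ _ g2] zz by auto
  obtain p3 q3 where s3: "seg z3 z4 p3 q3" using seg_ex[OF _ _ _ g3] zz by auto
  obtain p4 q4 where s4: "seg z4 z5 p4 q4" using seg_ex[OF _ _ _ g4] zz by auto
  obtain p5 q5 where s5: "seg z5 T p5 q5" using seg_ex[OF _ _ _ g5] zz by auto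
  have tr1: "c \<noteq> 0 \<and> p1 = - sgn c * b \<and> q1 = sgn c * a"
    using seg_trans[OF s0 s1 t0 zz(2) _ zeros(1)] zz by auto
  have tr2: "p2 = - sgn c * q1 \<and> q2 = sgn c * p1"
    using seg_trans[OF s1 s2 _ zz(2) zz(3) _ zeros(2)] zz by auto
  have tr3: "p3 = - sgn c * q2 \<and> q3 = sgn c * p2"
    using seg_trans[OF s2 s3 _ zz(3) zz(4) _ zeros(3)] zz by auto
  have tr4: "p4 = - sgn c * q3 \<and> q4 = sgn c * p3"
    using seg_trans[OF s3 s4 _ zz(4) zz(5) _ zeros(4)] zz by auto
  have tr5: "p5 = - sgn c * q4 \<and> q5 = sgn c * p4"
    using seg_trans[OF s4 s5 _ zz(5) zz(6) _ zeros(5)] zz by auto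
  define s where "s = sgn c"
  have c0: "c \<noteq> 0" using tr1 by simp
  then have spm: "s = 1 \<or> s = -1" unfolding s_def by (auto simp: sgn_if)
  have ab: "a = 1 \<or> a = -1" "b = 1 \<or> b = -1" using seg_pm[OF s0] by auto
  have d1: "p1 = - s * b" "q1 = s * a" using tr1 unfolding s_def by auto
  have d2: "p2 = - a" "q2 = - b" using tr2 d1 spm unfolding s_def[symmetric] by auto
  have d3: "p3 = s * b" "q3 = - s * a" using tr3 d2 spm unfolding s_def[symmetric] by auto
  have d4: "p4 = a" "q4 = b" using tr4 d3 spm unfolding s_def[symmetric] by auto
  have d5: "p5 = - s * b" "q5 = s * a" using tr5 d4 spm unfolding s_def[symmetric] by auto
  define tau where "tau = l0 / \<bar>c\<bar>"
  have ac0: "\<bar>c\<bar> > 0" using c0 by simp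
  have len: "z2 - z1 = tau" "z3 - z2 = tau" "z4 - z3 = tau" "z5 - z4 = tau"
  proof -
    have "\<bar>c\<bar> * (z2 - z1) = l0" by (rule seg_len[OF s1 _ zz(2) _ zeros(1) zeros(2)]) (use zz in auto)
    then show "z2 - z1 = tau" unfolding tau_def using ac0 by (simp add: field_simps)
    have "\<bar>c\<bar> * (z3 - z2) = l0" by (rule seg_len[OF s2 _ zz(3) _ zeros(2) zeros(3)]) (use zz in auto)
    then show "z3 - z2 = tau" unfolding tau_def using ac0 by (simp add: field_simps)
    have "\<bar>c\<bar> * (z4 - z3) = l0" by (rule seg_len[OF s3 _ zz(4) _ zeros(3) zeros(4)]) (use zz in auto)
    then show "z4 - z3 = tau" unfolding tau_def using ac0 by (simp add: field_simps)
    have "\<bar>c\<bar> * (z5 - z4) = l0" by (rule seg_len[OF s4 _ zz(5) _ zeros(4) zeros(5)]) (use zz in auto)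
    then show "z5 - z4 = tau" unfolding tau_def using ac0 by (simp add: field_simps)
  qed
  define e1 where "e1 = z1 - t0"
  define e2 where "e2 = T - z5"
  have e1: "0 < e1" "e1 \<le> tau"
  proof -
    show "0 < e1" unfolding e1_def using t0 by simp
    have "\<bar>c\<bar> * (z1 - t0) \<le> l0" by (rule seg_len_le[OF s0 t0]) (use zz zeros in auto)
    then show "e1 \<le> tau" unfolding e1_def tau_def using ac0 by (simp add: field_simps)
  qed
  have e2: "0 < e2" "e2 \<le> tau"
  proof -
    show "0 < e2" unfolding e2_def using zz by simp
    have "\<bar>c\<bar> * (T - z5) \<le> l0" by (rule seg_len_le[OF s5]) (use zz zeros in auto)
    then show "e2 \<le> tau" unfolding e2_def tau_def using ac0 by (simp add: field_simps)
  qed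
  have TT: "T = t0 + e1 + 4 * tau + e2" using len unfolding e1_def e2_def by simp
  have gz1: "\<gamma> z1 = mv (\<gamma> t0) a b e1" unfolding e1_def using seg_end[OF s0] t0 by simp
  have gz2: "\<gamma> z2 = mv (\<gamma> z1) (- s * b) (s * a) tau" using seg_end[OF s1] zz len d1 by simp
  have gz3: "\<gamma> z3 = mv (\<gamma> z2) (- a) (- b) tau" using seg_end[OF s2] zz len d2 by simp
  have gz4: "\<gamma> z4 = mv (\<gamma> z3) (s * b) (- s * a) tau" using seg_end[OF s3] zz len d3 by simp
  have gz5: "\<gamma> z5 = mv (\<gamma> z4) a b tau" using seg_end[OF s4] zz len d4 by simp
  have gT: "\<gamma> T = mv (\<gamma> z5) (- s * b) (s * a) e2" unfolding e2_def using seg_end[OF s5] zz d5 by simp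
  show ?thesis
    by (rule shortcut[OF adm t0(1) e1 e2 TT spm ab]) (simp add: gT gz5 gz4 gz3 gz2 gz1)
qed

end

lemma sgn_from_max:
  fixes u1 u2 p1 p2 :: real
  assumes "\<bar>u1\<bar> \<le> 1" "\<bar>u2\<bar> \<le> 1" "u1 * p1 + u2 * p2 = \<bar>p1\<bar> + \<bar>p2\<bar>" "p1 \<noteq> 0"
  shows "u1 = sgn p1"
proof -
  have a1: "u1 * p1 \<le> \<bar>p1\<bar>"
  proof -
    have "u1 * p1 \<le> \<bar>u1 * p1\<bar>" by simp
    also have "\<dots> = \<bar>u1\<bar> * \<bar>p1\<bar>" by (simp add: abs_mult)
    also have "\<dots> \<le> 1 * \<bar>p1\<bar>" using assms(1) by (intro mult_right_mono) auto
    finally show ?thesis by simp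
  qed
  have a2: "u2 * p2 \<le> \<bar>p2\<bar>"
  proof -
    have "u2 * p2 \<le> \<bar>u2 * p2\<bar>" by simp
    also have "\<dots> = \<bar>u2\<bar> * \<bar>p2\<bar>" by (simp add: abs_mult)
    also have "\<dots> \<le> 1 * \<bar>p2\<bar>" using assms(2) by (intro mult_right_mono) auto
    finally show ?thesis by simp
  qed
  have e: "u1 * p1 = \<bar>p1\<bar>" using a1 a2 assms(3) by linarith
  show ?thesis
  proof (cases "p1 > 0")
    case True
    then have "u1 * p1 = 1 * p1" using e by simp
    then have "u1 = 1" using True by (metis mult_right_cancel less_irrefl)
    then show ?thesis using True by simp
  next
    case False
    then have p: "p1 < 0" using assms(4) by simp
    then have "u1 * p1 = (-1) * p1" using e by simp
    then have "u1 = -1" using p by (metis mult_right_cancel less_irrefl)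
    then show ?thesis using p by simp
  qed
qed

lemma cont_ae_zero:
  fixes h :: "real \<Rightarrow> real"
  assumes cont: "continuous_on {0..T} h" and T: "0 < T" and N: "negligible N"
    and z: "\<And>t. t \<in> {0..T} - N \<Longrightarrow> h t = 0" and t: "t \<in> {0..T}"
  shows "h t = 0"
proof (rule ccontr)
  assume ne: "h t \<noteq> 0"
  have "\<exists>d>0. \<forall>x'\<in>{0..T}. dist x' t < d \<longrightarrow> dist (h x') (h t) < \<bar>h t\<bar>"
    using cont t ne unfolding continuous_on_iff by simp
  then obtain d where d: "d > 0" and H: "\<And>x'. x' \<in> {0..T} \<Longrightarrow> dist x' t < d \<Longrightarrow> dist (h x') (h t) < \<bar>h t\<bar>"
    by blast
  define p where "p = max 0 (t - d / 2)"
  define q where "q = min T (t + d / 2)"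
  have pq: "p < q" using t T d unfolding p_def q_def by auto
  have sub: "{p..q} \<subseteq> N"
  proof
    fix x assume x: "x \<in> {p..q}"
    then have x0: "x \<in> {0..T}" unfolding p_def q_def by auto
    have "dist x t < d" using x d unfolding p_def q_def dist_real_def by auto
    then have "dist (h x) (h t) < \<bar>h t\<bar>" using H x0 by blast
    then have "h x \<noteq> 0" by (auto simp: dist_real_def)
    then show "x \<in> N" using z x0 by blast
  qed
  have "negligible {p..q}" using negligible_subset[OF N sub] .
  then show False using pq negligible_interval(1)[of p q] by simp
qed

lemma ham_deriv:
  "((\<lambda>p. ham l p v1 v2) has_derivative
     (\<lambda>h. v2 * (snd (snd l) / 2) * fst h - v1 * (snd (snd l) / 2) * fst (snd h))) (at q)"
proof -
  have eq: "(\<lambda>p. ham l p v1 v2) = (\<lambda>p. v1 * (fst l - snd (snd l) * fst (snd p) / 2) + v2 * (fst (snd l) + snd (snd l) * fst p / 2))"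
    unfolding ham_def inner_X1 inner_X2 by simp
  show ?thesis unfolding eq
    by (auto intro!: derivative_eq_intros simp: algebra_simps)
qed

lemma lam_deriv:
  assumes "(lam has_vector_derivative l') (at t)"
    and "((\<lambda>p. ham (lam t) p v1 v2) has_derivative (\<lambda>h. - (l' \<bullet> h))) (at q)"
  shows "l' = (- v2 * snd (snd (lam t)) / 2, v1 * snd (snd (lam t)) / 2, 0)"
proof -
  have "(\<lambda>h. - (l' \<bullet> h)) = (\<lambda>h. v2 * (snd (snd (lam t)) / 2) * fst h - v1 * (snd (snd (lam t)) / 2) * fst (snd h))"
    using has_derivative_unique[OF assms(2) ham_deriv] .
  then have E: "\<And>h. - (l' \<bullet> h) = v2 * (snd (snd (lam t)) / 2) * fst h - v1 * (snd (snd (lam t)) / 2) * fst (snd h)"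
    by metis
  obtain a b cc where l': "l' = (a, b, cc)" by (cases l')
  have "a = - v2 * snd (snd (lam t)) / 2" using E[of "(1, 0, 0)"] l' by simp
  moreover have "b = v1 * snd (snd (lam t)) / 2" using E[of "(0, 1, 0)"] l' by simp
  moreover have "cc = 0" using E[of "(0, 0, 1)"] l' by simp
  ultimately show ?thesis using l' by simp
qed


theorem mainTheorem5:
  fixes T :: real and \<gamma> lam :: "real \<Rightarrow> R3" and u1 u2 :: "real \<Rightarrow> real"
  assumes "extremal_pair T \<gamma> u1 u2 lam"
    and "regular_bang_bang_wrt T \<gamma> lam"
    and "card (arcs T \<gamma> lam) > 5"
  shows "\<not> time_minimizer T \<gamma>"
proof -
  have adm: "admissible T \<gamma> u1 u2" and acl: "abs_cont_on 0 T lam"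
    using assms(1) unfolding extremal_pair_def by auto
  obtain lam0 where lam0: "lam0 \<ge> 0" and AEx: "AE t in lebesgue. t \<in> {0..T} \<longrightarrow>
          (\<exists>l'. (lam has_vector_derivative l') (at t) \<and>
               ((\<lambda>p. ham (lam t) p (u1 t) (u2 t)) has_derivative (\<lambda>h. - (l' \<bullet> h))) (at (\<gamma> t))) \<and>
          (\<gamma> has_vector_derivative
              (u1 t *\<^sub>R X1 (\<gamma> t) + u2 t *\<^sub>R X2 (\<gamma> t))) (at t) \<and>
          ((\<lambda>l. ham l (\<gamma> t) (u1 t) (u2 t)) has_derivative
              (\<lambda>h. h \<bullet> (u1 t *\<^sub>R X1 (\<gamma> t) + u2 t *\<^sub>R X2 (\<gamma> t)))) (at (lam t)) \<and>
          u1 t * (lam t \<bullet> X1 (\<gamma> t)) + u2 t * (lam t \<bullet> X2 (\<gamma> t)) = lam0 \<and>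
          \<bar>lam t \<bullet> X1 (\<gamma> t)\<bar> + \<bar>lam t \<bullet> X2 (\<gamma> t)\<bar> = lam0"
    using assms(1) unfolding extremal_pair_def by blast
  from adm have acg: "abs_cont_on 0 T \<gamma>"
    and AEa: "AE t in lebesgue. t \<in> {0..T} \<longrightarrow> \<bar>u1 t\<bar> \<le> 1 \<and> \<bar>u2 t\<bar> \<le> 1 \<and>
        (\<gamma> has_vector_derivative (u1 t *\<^sub>R X1 (\<gamma> t) + u2 t *\<^sub>R X2 (\<gamma> t))) (at t)"
    unfolding admissible_def by auto
  obtain N1 where N1: "{t \<in> space lebesgue. \<not> (t \<in> {0..T} \<longrightarrow>
          (\<exists>l'. (lam has_vector_derivative l') (at t) \<and>
               ((\<lambda>p. ham (lam t) p (u1 t) (u2 t)) has_derivative (\<lambda>h. - (l' \<bullet> h))) (at (\<gamma> t))) \<and>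
          (\<gamma> has_vector_derivative
              (u1 t *\<^sub>R X1 (\<gamma> t) + u2 t *\<^sub>R X2 (\<gamma> t))) (at t) \<and>
          ((\<lambda>l. ham l (\<gamma> t) (u1 t) (u2 t)) has_derivative
              (\<lambda>h. h \<bullet> (u1 t *\<^sub>R X1 (\<gamma> t) + u2 t *\<^sub>R X2 (\<gamma> t)))) (at (lam t)) \<and>
          u1 t * (lam t \<bullet> X1 (\<gamma> t)) + u2 t * (lam t \<bullet> X2 (\<gamma> t)) = lam0 \<and>
          \<bar>lam t \<bullet> X1 (\<gamma> t)\<bar> + \<bar>lam t \<bullet> X2 (\<gamma> t)\<bar> = lam0)} \<subseteq> N1"
      "emeasure lebesgue N1 = 0" "N1 \<in> sets lebesgue"
    using AE_E[OF AEx] by blast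
  obtain N2 where N2: "{t \<in> space lebesgue. \<not> (t \<in> {0..T} \<longrightarrow> \<bar>u1 t\<bar> \<le> 1 \<and> \<bar>u2 t\<bar> \<le> 1 \<and>
        (\<gamma> has_vector_derivative (u1 t *\<^sub>R X1 (\<gamma> t) + u2 t *\<^sub>R X2 (\<gamma> t))) (at t))} \<subseteq> N2"
      "emeasure lebesgue N2 = 0" "N2 \<in> sets lebesgue"
    using AE_E[OF AEa] by blast
  define N where "N = N1 \<union> N2"
  have negN: "negligible N"
  proof -
    have "N1 \<in> null_sets lebesgue" "N2 \<in> null_sets lebesgue" using N1 N2 by auto
    then have "N \<in> null_sets lebesgue" unfolding N_def by auto
    then show ?thesis using negligible_iff_null_sets by blast
  qed
  have KA: "\<bar>u1 t\<bar> \<le> 1 \<and> \<bar>u2 t\<bar> \<le> 1 \<and>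
        (\<gamma> has_vector_derivative (u1 t *\<^sub>R X1 (\<gamma> t) + u2 t *\<^sub>R X2 (\<gamma> t))) (at t)"
    if "t \<in> {0..T} - N" for t
    using N2(1) that unfolding N_def by auto
  have KX: "(\<exists>l'. (lam has_vector_derivative l') (at t) \<and>
               ((\<lambda>p. ham (lam t) p (u1 t) (u2 t)) has_derivative (\<lambda>h. - (l' \<bullet> h))) (at (\<gamma> t))) \<and>
          u1 t * (lam t \<bullet> X1 (\<gamma> t)) + u2 t * (lam t \<bullet> X2 (\<gamma> t)) = lam0 \<and>
          \<bar>lam t \<bullet> X1 (\<gamma> t)\<bar> + \<bar>lam t \<bullet> X2 (\<gamma> t)\<bar> = lam0"
    if "t \<in> {0..T} - N" for t
    using N1(1) that unfolding N_def by auto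
  have lder: "(lam has_vector_derivative (- u2 t * snd (snd (lam t)) / 2, u1 t * snd (snd (lam t)) / 2, 0)) (at t)"
    if tN: "t \<in> {0..T} - N" for t
  proof -
    obtain l' where l': "(lam has_vector_derivative l') (at t)"
      "((\<lambda>p. ham (lam t) p (u1 t) (u2 t)) has_derivative (\<lambda>h. - (l' \<bullet> h))) (at (\<gamma> t))"
      using KX[OF tN] by blast
    show ?thesis using l'(1) lam_deriv[OF l'] by simp
  qed
  define c where "c = snd (snd (lam 0))"
  have T0: "0 \<le> T" using adm unfolding admissible_def by simp
  have lz: "snd (snd (lam s)) = c" if s: "s \<in> {0..T}" for s
  proof -
    have acz: "abs_cont_on 0 s (\<lambda>t. snd (snd (lam t)))"
    proof (rule ac_dominated[OF ac_sub[OF acl order_refl] ac_const[of 0 s 0], where K = 1])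
      show "s \<le> T" using s by simp
      fix a b
      have "norm (snd (snd (lam b)) - snd (snd (lam a))) = norm (snd (snd (lam b - lam a)))" by simp
      also have "\<dots> \<le> norm (lam b - lam a)" by (metis norm_snd_le order_trans prod.collapse)
      finally show "norm (snd (snd (lam b)) - snd (snd (lam a))) \<le> 1 * (norm (lam b - lam a) + norm ((0::real) - 0) + \<bar>b - a\<bar>)"
        by simp
    qed simp
    have "norm (snd (snd (lam s)) - snd (snd (lam 0))) \<le> 0 * (s - 0)"
    proof (rule ac_deriv_bound[OF acz _ negN])
      show "0 \<le> s" using s by simp
      fix t assume t: "t \<in> {0..s} - N"
      then have t': "t \<in> {0..T} - N" using s by auto
      have bl: "bounded_linear (\<lambda>v::R3. snd (snd v))"
        by (rule bounded_linear_compose[OF bounded_linear_snd bounded_linear_snd])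
      have "((\<lambda>t. snd (snd (lam t))) has_vector_derivative 0) (at t)"
        using hvd_linear[OF lder[OF t'] bl] by simp
      then show "\<exists>D. ((\<lambda>t. snd (snd (lam t))) has_vector_derivative D) (at t) \<and> norm D \<le> 0"
        by (intro exI[of _ 0]) simp
    qed
    then show ?thesis unfolding c_def by simp
  qed
  define W where "W t = (fst (lam t), fst (snd (lam t))) + (c / 2 * fst (snd (\<gamma> t)), - c / 2 * fst (\<gamma> t))" for t
  have Wc: "W s = W 0" if s: "s \<in> {0..T}" for s
  proof -
    have bl1: "bounded_linear (\<lambda>v::R3. (fst v, fst (snd v)))" by (rule bl_proj12)
    have bl2: "bounded_linear (\<lambda>v::R3. (c / 2 * fst (snd v), - c / 2 * fst v))"
      by (intro bounded_linear_Pair bounded_linear_mult_right[THEN bounded_linear_compose]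
          bounded_linear_fst bounded_linear_compose[OF bounded_linear_fst bounded_linear_snd])
    have acW: "abs_cont_on 0 s W"
    proof (rule ac_dominated[OF ac_sub[OF acl order_refl] ac_sub[OF acg order_refl], where K = "2 + \<bar>c\<bar>"])
      show "s \<le> T" "s \<le> T" using s by simp_all
      show "0 \<le> 2 + \<bar>c\<bar>" by simp
      fix a b
      have eq: "W b - W a = (fst (lam b - lam a), fst (snd (lam b - lam a))) +
          (c / 2 * fst (snd (\<gamma> b - \<gamma> a)), - c / 2 * fst (\<gamma> b - \<gamma> a))"
        unfolding W_def by (simp add: algebra_simps)
      have n1: "norm (fst (lam b - lam a), fst (snd (lam b - lam a))) \<le> 2 * norm (lam b - lam a)"
        by (rule norm_proj12)
      have n2: "norm (c / 2 * fst (snd (\<gamma> b - \<gamma> a)), - c / 2 * fst (\<gamma> b - \<gamma> a)) \<le> \<bar>c\<bar> * norm (\<gamma> b - \<gamma> a)"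
      proof -
        have "(c / 2 * fst (snd (\<gamma> b - \<gamma> a)), - c / 2 * fst (\<gamma> b - \<gamma> a)) =
              (c / 2) *\<^sub>R (fst (snd (\<gamma> b - \<gamma> a)), - fst (\<gamma> b - \<gamma> a))" by (simp add: algebra_simps)
        then have "norm (c / 2 * fst (snd (\<gamma> b - \<gamma> a)), - c / 2 * fst (\<gamma> b - \<gamma> a)) =
              \<bar>c / 2\<bar> * norm (fst (snd (\<gamma> b - \<gamma> a)), - fst (\<gamma> b - \<gamma> a))" by (metis norm_scaleR)
        also have "norm (fst (snd (\<gamma> b - \<gamma> a)), - fst (\<gamma> b - \<gamma> a)) \<le> 2 * norm (\<gamma> b - \<gamma> a)"
        proof -
          have "norm (fst (snd (\<gamma> b - \<gamma> a)), - fst (\<gamma> b - \<gamma> a)) = norm (fst (\<gamma> b - \<gamma> a), fst (snd (\<gamma> b - \<gamma> a)))"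
            by (simp add: norm_Pair power2_commute)
          then show ?thesis using norm_proj12[of "\<gamma> b - \<gamma> a"] by linarith
        qed
        then have "\<bar>c / 2\<bar> * norm (fst (snd (\<gamma> b - \<gamma> a)), - fst (\<gamma> b - \<gamma> a)) \<le> \<bar>c / 2\<bar> * (2 * norm (\<gamma> b - \<gamma> a))"
          by (intro mult_left_mono) auto
        finally show ?thesis by simp
      qed
      have "norm (W b - W a) \<le> 2 * norm (lam b - lam a) + \<bar>c\<bar> * norm (\<gamma> b - \<gamma> a)"
        unfolding eq using norm_triangle_ineq[of "(fst (lam b - lam a), fst (snd (lam b - lam a)))"
          "(c / 2 * fst (snd (\<gamma> b - \<gamma> a)), - c / 2 * fst (\<gamma> b - \<gamma> a))"] n1 n2 by linarith
      also have "\<dots> \<le> (2 + \<bar>c\<bar>) * (norm (lam b - lam a) + norm (\<gamma> b - \<gamma> a) + \<bar>b - a\<bar>)"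
        by (simp add: algebra_simps)
      finally show "norm (W b - W a) \<le> (2 + \<bar>c\<bar>) * (norm (lam b - lam a) + norm (\<gamma> b - \<gamma> a) + \<bar>b - a\<bar>)" .
    qed
    have "norm (W s - W 0) \<le> 0 * (s - 0)"
    proof (rule ac_deriv_bound[OF acW _ negN])
      show "0 \<le> s" using s by simp
      fix t assume t: "t \<in> {0..s} - N"
      then have t': "t \<in> {0..T} - N" and tT: "t \<in> {0..T}" using s by auto
      have D1: "((\<lambda>t. (fst (lam t), fst (snd (lam t)))) has_vector_derivative (- u2 t * c / 2, u1 t * c / 2)) (at t)"
        using hvd_linear[OF lder[OF t'] bl1] lz[OF tT] by simp
      have D2: "((\<lambda>t. (c / 2 * fst (snd (\<gamma> t)), - c / 2 * fst (\<gamma> t))) has_vector_derivative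
          (c / 2 * u2 t, - c / 2 * u1 t)) (at t)"
        using hvd_linear[OF conjunct2[OF conjunct2[OF KA[OF t']]] bl2] by (simp add: field_eq)
      have "(W has_vector_derivative ((- u2 t * c / 2, u1 t * c / 2) + (c / 2 * u2 t, - c / 2 * u1 t))) (at t)"
        unfolding W_def by (rule has_vector_derivative_add[OF D1 D2])
      then have "(W has_vector_derivative 0) (at t)" by (simp add: algebra_simps zero_prod_def)
      then show "\<exists>D. (W has_vector_derivative D) (at t) \<and> norm D \<le> 0"
        by (intro exI[of _ 0]) simp
    qed
    then show ?thesis by simp
  qed
  define A0 where "A0 = fst (W 0)"
  define B0 where "B0 = snd (W 0)"
  define P1 where "P1 = phi1 \<gamma> lam"
  define P2 where "P2 = phi2 \<gamma> lam"
  have P1e: "P1 t = A0 - c * fst (snd (\<gamma> t))" if t: "t \<in> {0..T}" for t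
  proof -
    have "fst (W t) = A0" unfolding A0_def using Wc[OF t] by simp
    then have "fst (lam t) = A0 - c / 2 * fst (snd (\<gamma> t))" unfolding W_def by simp
    then show ?thesis unfolding P1_def phi1_def inner_X1 lz[OF t] by simp
  qed
  have P2e: "P2 t = B0 + c * fst (\<gamma> t)" if t: "t \<in> {0..T}" for t
  proof -
    have "snd (W t) = B0" unfolding B0_def using Wc[OF t] by simp
    then have "fst (snd (lam t)) = B0 + c / 2 * fst (\<gamma> t)" unfolding W_def by simp
    then show ?thesis unfolding P2_def phi2_def inner_X2 lz[OF t] by simp
  qed
  have sg1: "u1 t = sgn (P1 t)" if "t \<in> {0..T} - N" "P1 t \<noteq> 0" "P2 t \<noteq> 0" for t
    using sgn_from_max[of "u1 t" "u2 t" "P1 t" "P2 t"] KA[OF that(1)] KX[OF that(1)] that(2)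
    unfolding P1_def P2_def phi1_def phi2_def by simp
  have sg2: "u2 t = sgn (P2 t)" if "t \<in> {0..T} - N" "P1 t \<noteq> 0" "P2 t \<noteq> 0" for t
    using sgn_from_max[of "u2 t" "u1 t" "P2 t" "P1 t"] KA[OF that(1)] KX[OF that(1)] that(3)
    unfolding P1_def P2_def phi1_def phi2_def by (simp add: add.commute)
  have finA: "finite (arcs T \<gamma> lam)" using assms(3) card.infinite by fastforce
  have neA: "arcs T \<gamma> lam \<noteq> {}" using assms(3) by auto
  then obtain a0 b0 where ab0: "(a0, b0) \<in> arcs T \<gamma> lam" by auto
  then have reg0: "regular_arc T \<gamma> lam a0 b0" unfolding arcs_def max_regular_arc_def by simp
  then have Tpos: "0 < T" unfolding regular_arc_def by simp
  have contg: "continuous_on {0..T} \<gamma>" using ac_continuous[OF acg] .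
  have cP1: "continuous_on {0..T} P1"
  proof -
    have "continuous_on {0..T} (\<lambda>t. A0 - c * fst (snd (\<gamma> t)))" using contg by (intro continuous_intros) auto
    then show ?thesis by (rule continuous_on_eq) (use P1e in auto)
  qed
  have cP2: "continuous_on {0..T} P2"
  proof -
    have "continuous_on {0..T} (\<lambda>t. B0 + c * fst (\<gamma> t))" using contg by (intro continuous_intros) auto
    then show ?thesis by (rule continuous_on_eq) (use P2e in auto)
  qed
  have nrm: "\<bar>P1 t\<bar> + \<bar>P2 t\<bar> = lam0" if t: "t \<in> {0..T}" for t
  proof -
    have "(\<lambda>t. \<bar>P1 t\<bar> + \<bar>P2 t\<bar> - lam0) t = 0"
    proof (rule cont_ae_zero[OF _ Tpos negN _ t])
      show "continuous_on {0..T} (\<lambda>t. \<bar>P1 t\<bar> + \<bar>P2 t\<bar> - lam0)" using cP1 cP2 by (intro continuous_intros)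
      fix s assume "s \<in> {0..T} - N"
      then show "\<bar>P1 s\<bar> + \<bar>P2 s\<bar> - lam0 = 0" using KX unfolding P1_def P2_def phi1_def phi2_def by simp
    qed
    then show ?thesis by simp
  qed
  have l0pos: "lam0 > 0"
  proof (rule ccontr)
    assume "\<not> lam0 > 0"
    then have "lam0 = 0" using lam0 by simp
    define m where "m = (a0 + b0) / 2"
    have "m \<in> {a0<..<b0}" "m \<in> {0..T}" using reg0 unfolding m_def regular_arc_def by auto
    then have "P1 m \<noteq> 0" using reg0 unfolding regular_arc_def P1_def by blast
    then show False using nrm[OF \<open>m \<in> {0..T}\<close>] \<open>lam0 = 0\<close> by simp
  qed
  interpret C: ctx T \<gamma> u1 u2 N P1 P2 A0 B0 c lam0
  proof
    show "abs_cont_on 0 T \<gamma>" by (fact acg)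
    show "negligible N" by (fact negN)
    show "\<And>t. t \<in> {0..T} - N \<Longrightarrow> (\<gamma> has_vector_derivative u1 t *\<^sub>R X1 (\<gamma> t) + u2 t *\<^sub>R X2 (\<gamma> t)) (at t)"
      using KA by blast
    show "\<And>t. t \<in> {0..T} - N \<Longrightarrow> P1 t \<noteq> 0 \<Longrightarrow> P2 t \<noteq> 0 \<Longrightarrow> u1 t = sgn (P1 t)" by (rule sg1)
    show "\<And>t. t \<in> {0..T} - N \<Longrightarrow> P1 t \<noteq> 0 \<Longrightarrow> P2 t \<noteq> 0 \<Longrightarrow> u2 t = sgn (P2 t)" by (rule sg2)
    show "\<And>t. t \<in> {0..T} \<Longrightarrow> P1 t = A0 - c * fst (snd (\<gamma> t))" by (rule P1e)
    show "\<And>t. t \<in> {0..T} \<Longrightarrow> P2 t = B0 + c * fst (\<gamma> t)" by (rule P2e)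
    show "\<And>t. t \<in> {0..T} \<Longrightarrow> \<bar>P1 t\<bar> + \<bar>P2 t\<bar> = lam0" by (rule nrm)
    show "0 < lam0" by (fact l0pos)
  qed
  define Z where "Z = {t \<in> {0<..<T}. P1 t = 0 \<or> P2 t = 0}"
  obtain S A where SA: "finite S" "finite A" "A \<subseteq> arcs T \<gamma> lam" "{0..T} - S = (\<Union>(a, b)\<in>A. {a<..<b})"
    using assms(2) unfolding regular_bang_bang_wrt_def by blast
  have ZS: "Z \<subseteq> S"
  proof
    fix t assume tZ: "t \<in> Z"
    show "t \<in> S"
    proof (rule ccontr)
      assume "t \<notin> S"
      then have "t \<in> {0..T} - S" using tZ unfolding Z_def by auto
      then obtain a b where ab: "(a, b) \<in> A" "t \<in> {a<..<b}" using SA(4) by blast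
      then have "regular_arc T \<gamma> lam a b" using SA(3) unfolding arcs_def max_regular_arc_def by auto
      then have "P1 t \<noteq> 0 \<and> P2 t \<noteq> 0" using ab(2) unfolding regular_arc_def P1_def P2_def by blast
      then show False using tZ unfolding Z_def by auto
    qed
  qed
  have finZ: "finite Z" using finite_subset[OF ZS SA(1)] .
  have inj: "inj_on fst (arcs T \<gamma> lam)"
  proof (rule inj_onI)
    fix x y assume x: "x \<in> arcs T \<gamma> lam" and y: "y \<in> arcs T \<gamma> lam" and fxy: "fst x = fst y"
    obtain a b where xab: "x = (a, b)" by (cases x)
    obtain a' b' where yab: "y = (a', b')" by (cases y)
    have aa: "a' = a" using fxy xab yab by simp
    have mx: "max_regular_arc T \<gamma> lam a b" using x xab unfolding arcs_def by simp
    have my: "max_regular_arc T \<gamma> lam a b'" using y yab aa unfolding arcs_def by simp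
    have "b = b'"
    proof (cases "b \<le> b'")
      case True
      then have "{a<..<b} \<subseteq> {a<..<b'}" by auto
      then show ?thesis using mx my unfolding max_regular_arc_def by blast
    next
      case False
      then have "{a<..<b'} \<subseteq> {a<..<b}" by auto
      then show ?thesis using mx my unfolding max_regular_arc_def by (metis)
    qed
    then show "x = y" using xab yab aa by simp
  qed
  have imgZ: "fst ` arcs T \<gamma> lam \<subseteq> insert 0 Z"
  proof
    fix a assume "a \<in> fst ` arcs T \<gamma> lam"
    then obtain b where ab: "(a, b) \<in> arcs T \<gamma> lam" by force
    then have mx: "max_regular_arc T \<gamma> lam a b" unfolding arcs_def by simp
    then have rg: "regular_arc T \<gamma> lam a b" unfolding max_regular_arc_def by simp
    then have a0: "0 \<le> a" "a < b" "b \<le> T" unfolding regular_arc_def by auto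
    show "a \<in> insert 0 Z"
    proof (cases "a = 0")
      case True then show ?thesis by simp
    next
      case False
      then have apos: "0 < a" using a0 by simp
      have "P1 a = 0 \<or> P2 a = 0"
      proof (rule ccontr)
        assume "\<not> (P1 a = 0 \<or> P2 a = 0)"
        then have nz: "P1 a \<noteq> 0" "P2 a \<noteq> 0" by auto
        have aT: "a \<in> {0..T}" using a0 by auto
        obtain d1 where d1: "d1 > 0" "\<And>x'. x' \<in> {0..T} \<Longrightarrow> dist x' a < d1 \<Longrightarrow> dist (P1 x') (P1 a) < \<bar>P1 a\<bar>"
          using cP1 aT nz(1) unfolding continuous_on_iff by (metis zero_less_abs_iff)
        obtain d2 where d2: "d2 > 0" "\<And>x'. x' \<in> {0..T} \<Longrightarrow> dist x' a < d2 \<Longrightarrow> dist (P2 x') (P2 a) < \<bar>P2 a\<bar>"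
          using cP2 aT nz(2) unfolding continuous_on_iff by (metis zero_less_abs_iff)
        define a' where "a' = max 0 (a - min d1 d2 / 2)"
        have a'a: "a' < a" "0 \<le> a'" using apos d1 d2 unfolding a'_def by auto
        have pts: "\<forall>t\<in>{a'<..<b}. phi1 \<gamma> lam t \<noteq> 0 \<and> phi2 \<gamma> lam t \<noteq> 0"
        proof
          fix t assume t: "t \<in> {a'<..<b}"
          show "phi1 \<gamma> lam t \<noteq> 0 \<and> phi2 \<gamma> lam t \<noteq> 0"
          proof (cases "t \<le> a")
            case True
            then have tT: "t \<in> {0..T}" using t a'a a0 by auto
            have dt: "dist t a < d1" "dist t a < d2" using t True unfolding a'_def dist_real_def by auto
            have "P1 t \<noteq> 0" using d1(2)[OF tT dt(1)] by (auto simp: dist_real_def)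
            moreover have "P2 t \<noteq> 0" using d2(2)[OF tT dt(2)] by (auto simp: dist_real_def)
            ultimately show ?thesis unfolding P1_def P2_def by simp
          next
            case False
            then have "t \<in> {a<..<b}" using t by auto
            then show ?thesis using rg unfolding regular_arc_def by blast
          qed
        qed
        have rg': "regular_arc T \<gamma> lam a' b"
          unfolding regular_arc_def using pts a'a a0 by auto
        have "{a<..<b} \<subseteq> {a'<..<b}" using a'a by auto
        then have "a' = a" using mx rg' unfolding max_regular_arc_def by blast
        then show False using a'a by simp
      qed
      then show ?thesis unfolding Z_def using apos a0 by auto
    qed
  qed
  have "card (arcs T \<gamma> lam) = card (fst ` arcs T \<gamma> lam)" using card_image[OF inj] by simp
  also have "\<dots> \<le> card (insert 0 Z)" using card_mono[OF _ imgZ] finZ by simp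
  also have "\<dots> \<le> card Z + 1" using card_insert_le_m1 finZ by (simp add: card_insert_if)
  finally have "card (arcs T \<gamma> lam) \<le> card Z + 1" .
  then have cZ: "5 \<le> card Z" using assms(3) by simp
  show ?thesis by (rule C.ctx_main[OF adm Z_def finZ cZ])
qed


end
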